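(* Let $M$ be a Hausdorff space with continuous semiflow $(t,\omega)\mapsto t\omega$, $Z$ a Banach space, $A:D(A)\subset Z\to Z$ a closed linear operator, and $B,L:M\to L(Z,Z)$ each satisfying: $(\omega,z)\mapsto B(\omega)z$ (resp. $L(\omega)z$) is continuous, $\sup_{t\ge0}|B(t\omega)|<\infty$ (resp. $\sup_{t\ge0}|L(t\omega)|<\infty$) for every $\omega$, and these suprema are locally bounded in $\omega$. Let $\mathcal{C}(\omega)=AB(\omega)+L(\omega)$ and consider $\dot z(t)=\mathcal{C}(t\omega)z(t)$ (L) and, for $g\in C(\mathbb{R},Z)$, $\dot z(t)=\mathcal{C}(t\omega)z(t)+g(t)$ (G). (1) If (L) generates a $C_0$ linear cocycle $T_0$, then every mild solution $z\in C([0,a],Z)$ of (G) satisfies $z(t)=T_0(t,\omega)z(0)+\int_0^tT_0(t-s,s\omega)g(s)\,ds$ for $t\in[0,a]$. (2) If (L) generates a $C_0$ cocycle correspondence $\{H_1(t,\omega)\sim(T_1(t,\omega),S_1(-t,t\omega))\}$ with spectral projections $P_\omega$, $P^c_\omega$, then every mild solution $z\in C([0,a],Z)$ of (G) satisfies, with $x(t)=P_{t\omega}z(t)$, $y(t)=P^c_{t\omega}z(t)$: $x(t)=T_1(t,\omega)x(0)+\int_0^tT_1(t-s,s\omega)P_{s\omega}g(s)\,ds$ and $y(t)=S_1(t-a,a\omega)y(a)-\int_t^aS_1(t-s,s\omega)P^c_{s\omega}g(s)\,ds$ for $t\in[0,a]$.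
   Context: A mild solution of (G) on $[a_0,b]$ is $u\in C([a_0,b],Z)$ with $\int_{a_0}^tB(s\omega)u(s)ds\in D(A)$ and $u(t)=u(a_0)+A\int_{a_0}^tB(s\omega)u(s)ds+\int_{a_0}^t(L(s\omega)u(s)+g(s))ds$ for $t\in[a_0,b]$; for (L) take $g=0$. (L) generates a $C_0$ linear cocycle $T_0$ if $T_0(t,\omega)\in L(Z,Z)$, $T_0(0,\omega)=\mathrm{id}$, $T_0(t+s,\omega)=T_0(t,s\omega)T_0(s,\omega)$, $(t,\omega,x)\mapsto T_0(t,\omega)x$ continuous, and for every $x\in Z$ the function $z(t)=T_0(t,\omega)x$, $t\ge0$, is the unique mild solution of (L) with $z(0)=x$. (L) generates a $C_0$ cocycle correspondence if: $Z=X_\omega\oplus Y_\omega$ with projections $P_\omega$ (onto $X_\omega$), $P^c_\omega=I-P_\omega$, $(\omega,z)\mapsto P_\omega z$ continuous; $T_1(t,\omega)\in L(X_\omega,X_{t\omega})$ is a strongly continuous linear cocycle; $S_1(-t,t\omega)\in L(Y_{t\omega},Y_\omega)$ ($t\ge0$; indexed by $(t,\omega)$, with $S_1(t-s,s\omega)$ for $t\le s$ denoting $S_1(-(s-t),(s-t)(t\omega)):Y_{s\omega}\to Y_{t\omega}$), $S_1(0,\omega)=\mathrm{id}$, $S_1(-(t+s),(t+s)\omega)=S_1(-s,s\omega)S_1(-t,t(s\omega))$, strongly continuous; and for $t_1\le t_2$, $x_1\in X_{t_1\omega}$, $y_2\in Y_{t_2\omega}$, $z(t)=T_1(t-t_1,t_1\omega)x_1+S_1(t-t_2,t_2\omega)y_2$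 ($t_1\le t\le t_2$) is the unique mild solution of (L) on $[t_1,t_2]$ with $P_{t_1\omega}z(t_1)=x_1$, $P^c_{t_2\omega}z(t_2)=y_2$. *)

theory Defs
  imports "HOL-Analysis.Analysis"
begin

text \<open>Continuous semiflow on M: phi t w stands for t w (only t \<ge> 0 is relevant).\<close>
definition semiflow :: "(real \<Rightarrow> 'm::topological_space \<Rightarrow> 'm) \<Rightarrow> bool" where
  "semiflow phi \<longleftrightarrow>
     continuous_on ({0..} \<times> UNIV) (\<lambda>(t, w). phi t w) \<and>
     (\<forall>w. phi 0 w = w) \<and>
     (\<forall>t s w. t \<ge> 0 \<longrightarrow> s \<ge> 0 \<longrightarrow> phi (t + s) w = phi t (phi s w))"

definition closed_linear_operator :: "'z::banach set \<Rightarrow> ('z \<Rightarrow> 'z) \<Rightarrow> bool" where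
  "closed_linear_operator D A \<longleftrightarrow>
     subspace D \<and>
     (\<forall>x\<in>D. \<forall>y\<in>D. A (x + y) = A x + A y) \<and>
     (\<forall>c. \<forall>x\<in>D. A (c *\<^sub>R x) = c *\<^sub>R A x) \<and>
     closed {(x, A x) | x. x \<in> D}"

definition admissible_coeff ::
  "(real \<Rightarrow> 'm::topological_space \<Rightarrow> 'm) \<Rightarrow> ('m \<Rightarrow> ('z::banach \<Rightarrow>\<^sub>L 'z)) \<Rightarrow> bool" where
  "admissible_coeff phi B \<longleftrightarrow>
     continuous_on UNIV (\<lambda>(w, z). blinfun_apply (B w) z) \<and>
     (\<forall>w. bdd_above ((\<lambda>t. norm (B (phi t w))) ` {0..})) \<and>
     (\<forall>w. \<exists>U C. open U \<and> w \<in> U \<and>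
          (\<forall>w'\<in>U. \<forall>t\<ge>0. norm (B (phi t w')) \<le> C))"

definition mild_sol ::
  "(real \<Rightarrow> 'm \<Rightarrow> 'm) \<Rightarrow> 'z::banach set \<Rightarrow> ('z \<Rightarrow> 'z) \<Rightarrow> ('m \<Rightarrow> ('z \<Rightarrow>\<^sub>L 'z)) \<Rightarrow>
   ('m \<Rightarrow> ('z \<Rightarrow>\<^sub>L 'z)) \<Rightarrow> (real \<Rightarrow> 'z) \<Rightarrow> 'm \<Rightarrow> real \<Rightarrow> real \<Rightarrow> (real \<Rightarrow> 'z) \<Rightarrow> bool" where
  "mild_sol phi D A B L g w a0 b u \<longleftrightarrow>
     continuous_on {a0..b} u \<and>
     (\<forall>t\<in>{a0..b}.
        integral {a0..t} (\<lambda>s. B (phi s w) (u s)) \<in> D \<and>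
        u t = u a0 + A (integral {a0..t} (\<lambda>s. B (phi s w) (u s)))
              + integral {a0..t} (\<lambda>s. L (phi s w) (u s) + g s))"

definition C0_linear_cocycle ::
  "(real \<Rightarrow> 'm::topological_space \<Rightarrow> 'm) \<Rightarrow> 'z::banach set \<Rightarrow> ('z \<Rightarrow> 'z) \<Rightarrow> ('m \<Rightarrow> ('z \<Rightarrow>\<^sub>L 'z)) \<Rightarrow>
   ('m \<Rightarrow> ('z \<Rightarrow>\<^sub>L 'z)) \<Rightarrow> (real \<Rightarrow> 'm \<Rightarrow> ('z \<Rightarrow>\<^sub>L 'z)) \<Rightarrow> bool" where
  "C0_linear_cocycle phi D A B L T0 \<longleftrightarrow>
     (\<forall>w. T0 0 w = id_blinfun) \<and>
     (\<forall>t s w. t \<ge> 0 \<longrightarrow> s \<ge> 0 \<longrightarrow> T0 (t + s) w = T0 t (phi s w) o\<^sub>L T0 s w) \<and>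
     continuous_on ({0..} \<times> UNIV \<times> UNIV) (\<lambda>(t, w, x). blinfun_apply (T0 t w) x) \<and>
     (\<forall>w x b. b \<ge> 0 \<longrightarrow>
        mild_sol phi D A B L (\<lambda>_. 0) w 0 b (\<lambda>t. T0 t w x) \<and>
        (\<forall>u. mild_sol phi D A B L (\<lambda>_. 0) w 0 b u \<and> u 0 = x \<longrightarrow>
             (\<forall>t\<in>{0..b}. u t = T0 t w x)))"

text \<open>Sb t w stands for S1(-t, t w) : Y_(t w) \<rightarrow> Y_w (indexed by (t,w)).\<close>
definition C0_cocycle_correspondence ::
  "(real \<Rightarrow> 'm::topological_space \<Rightarrow> 'm) \<Rightarrow> 'z::banach set \<Rightarrow> ('z \<Rightarrow> 'z) \<Rightarrow> ('m \<Rightarrow> ('z \<Rightarrow>\<^sub>L 'z)) \<Rightarrow>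
   ('m \<Rightarrow> ('z \<Rightarrow>\<^sub>L 'z)) \<Rightarrow> ('m \<Rightarrow> ('z \<Rightarrow>\<^sub>L 'z)) \<Rightarrow>
   (real \<Rightarrow> 'm \<Rightarrow> 'z \<Rightarrow> 'z) \<Rightarrow> (real \<Rightarrow> 'm \<Rightarrow> 'z \<Rightarrow> 'z) \<Rightarrow> bool" where
  "C0_cocycle_correspondence phi D A B L P T1 Sb \<longleftrightarrow>
     (let X = (\<lambda>w. range (blinfun_apply (P w)));
          Y = (\<lambda>w. range (\<lambda>z. z - P w z)) in
     (\<forall>w. P w o\<^sub>L P w = P w) \<and>
     continuous_on UNIV (\<lambda>(w, z). blinfun_apply (P w) z) \<and>
     \<comment> \<open>T1: strongly continuous linear cocycle on the bundle X\<close>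
     (\<forall>t w. t \<ge> 0 \<longrightarrow>
        (\<forall>x\<in>X w. T1 t w x \<in> X (phi t w)) \<and>
        (\<forall>x\<in>X w. \<forall>y\<in>X w. \<forall>a c. T1 t w (a *\<^sub>R x + c *\<^sub>R y) = a *\<^sub>R T1 t w x + c *\<^sub>R T1 t w y) \<and>
        (\<exists>C. \<forall>x\<in>X w. norm (T1 t w x) \<le> C * norm x)) \<and>
     (\<forall>w. \<forall>x\<in>X w. T1 0 w x = x) \<and>
     (\<forall>t s w. t \<ge> 0 \<longrightarrow> s \<ge> 0 \<longrightarrow> (\<forall>x\<in>X w. T1 (t + s) w x = T1 t (phi s w) (T1 s w x))) \<and>
     continuous_on {(t, w, x). t \<ge> 0 \<and> x \<in> X w} (\<lambda>(t, w, x). T1 t w x) \<and>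
     \<comment> \<open>Sb t w = S1(-t, t w): backward cocycle on the bundle Y\<close>
     (\<forall>t w. t \<ge> 0 \<longrightarrow>
        (\<forall>y\<in>Y (phi t w). Sb t w y \<in> Y w) \<and>
        (\<forall>x\<in>Y (phi t w). \<forall>y\<in>Y (phi t w). \<forall>a c. Sb t w (a *\<^sub>R x + c *\<^sub>R y) = a *\<^sub>R Sb t w x + c *\<^sub>R Sb t w y) \<and>
        (\<exists>C. \<forall>y\<in>Y (phi t w). norm (Sb t w y) \<le> C * norm y)) \<and>
     (\<forall>w. \<forall>y\<in>Y w. Sb 0 w y = y) \<and>
     (\<forall>t s w. t \<ge> 0 \<longrightarrow> s \<ge> 0 \<longrightarrow>
        (\<forall>y\<in>Y (phi (t + s) w). Sb (t + s) w y = Sb s w (Sb t (phi s w) y))) \<and>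
     continuous_on {(t, w, y). t \<ge> 0 \<and> y \<in> Y (phi t w)} (\<lambda>(t, w, y). Sb t w y) \<and>
     \<comment> \<open>boundary value problem\<close>
     (\<forall>w t1 t2 x1 y2. 0 \<le> t1 \<longrightarrow> t1 \<le> t2 \<longrightarrow> x1 \<in> X (phi t1 w) \<longrightarrow> y2 \<in> Y (phi t2 w) \<longrightarrow>
        (let zz = (\<lambda>t. T1 (t - t1) (phi t1 w) x1 + Sb (t2 - t) (phi t w) y2) in
          mild_sol phi D A B L (\<lambda>_. 0) w t1 t2 zz \<and>
          P (phi t1 w) (zz t1) = x1 \<and> zz t2 - P (phi t2 w) (zz t2) = y2 \<and>
          (\<forall>u. mild_sol phi D A B L (\<lambda>_. 0) w t1 t2 u \<and>
               P (phi t1 w) (u t1) = x1 \<and> u t2 - P (phi t2 w) (u t2) = y2 \<longrightarrow>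
               (\<forall>t\<in>{t1..t2}. u t = zz t)))))"

end

theory Submission
  imports Defs
begin


lemma integral_01_subst:
  fixes f :: "real \<Rightarrow> 'a::banach"
  assumes "x \<ge> 0"
  shows "integral {0..x} f = x *\<^sub>R integral {0..1} (\<lambda>\<theta>. f (x * \<theta>))"
proof (cases "x = 0")
  case True then show ?thesis by simp
next
  case False
  then have xp: "x > 0" using assms by simp
  have img: "(\<lambda>y. y / x) ` {0..x} = {0..1}"
  proof
    show "(\<lambda>y. y / x) ` {0..x} \<subseteq> {0..1}" using xp by (auto simp: field_simps)
    show "{0..1} \<subseteq> (\<lambda>y. y / x) ` {0..x}"
    proof
      fix u assume "u \<in> {0..(1::real)}"
      then have "x * u \<in> {0..x}" "u = (x*u)/x" using xp by (auto simp: mult_le_cancel_left1)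
      then show "u \<in> (\<lambda>y. y / x) ` {0..x}" by blast
    qed
  qed
  have "integral ((\<lambda>y. y / x) ` {0..x}) (\<lambda>y. f (x * y)) = (1 / \<bar>x\<bar>) *\<^sub>R integral {0..x} f"
    using integral_stretch_real[where m=x and a=0 and b=x and f=f] False by simp
  then show ?thesis using xp img by simp
qed

lemma PCV:
  fixes H :: "real \<Rightarrow> real \<Rightarrow> 'a::banach"
  assumes "continuous_on ({0..c} \<times> {0..c}) (\<lambda>(x,y). H x y)"
  shows "continuous_on {0..c} (\<lambda>x. integral {0..x} (H x))"
proof -
  have eq: "\<And>x. x \<in> {0..c} \<Longrightarrow> integral {0..x} (H x) = x *\<^sub>R integral (cbox 0 1) (\<lambda>\<theta>. H x (x * \<theta>))"
    using integral_01_subst by auto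
  have c2: "continuous_on ({0..c} \<times> cbox 0 1) (\<lambda>(x, \<theta>). H x (x * \<theta>))"
  proof -
    have "continuous_on ({0..c} \<times> cbox 0 1) ((\<lambda>(x,y). H x y) \<circ> (\<lambda>(x, \<theta>::real). (x, x * \<theta>)))"
    proof (rule continuous_on_compose)
      show "continuous_on ({0..c} \<times> cbox 0 1) (\<lambda>(x, \<theta>::real). (x, x * \<theta>))"
        unfolding case_prod_unfold by (intro continuous_intros)
      have "(\<lambda>(x, \<theta>::real). (x, x * \<theta>)) ` ({0..c} \<times> cbox 0 1) \<subseteq> {0..c} \<times> {0..c}"
        by (auto simp: mult_le_cancel_left1 intro: order_trans[OF mult_right_le_one_le])
      then show "continuous_on ((\<lambda>(x, \<theta>::real). (x, x * \<theta>)) ` ({0..c} \<times> cbox 0 1)) (\<lambda>(x,y). H x y)"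
        using assms continuous_on_subset by blast
    qed
    then show ?thesis by (simp add: o_def case_prod_unfold)
  qed
  have "continuous_on {0..c} (\<lambda>x. x *\<^sub>R integral (cbox 0 1) (\<lambda>\<theta>. H x (x * \<theta>)))"
    using integral_continuous_on_param[OF c2] by (intro continuous_intros) auto
  then show ?thesis using eq continuous_on_cong by (smt (verit))
qed

lemma slice1:
  assumes "continuous_on (S \<times> T) (\<lambda>(x,y). H x y)" "x \<in> S"
  shows "continuous_on T (H x)"
proof -
  have "continuous_on T ((\<lambda>(x,y). H x y) \<circ> (\<lambda>y. (x, y)))"
    by (rule continuous_on_compose) (auto intro!: continuous_intros intro: continuous_on_subset[OF assms(1)] simp: assms(2))
  then show ?thesis by (simp add: o_def)
qed

lemma slice2:
  assumes "continuous_on (S \<times> T) (\<lambda>(x,y). H x y)" "y \<in> T"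
  shows "continuous_on S (\<lambda>x. H x y)"
proof -
  have "continuous_on S ((\<lambda>(x,y). H x y) \<circ> (\<lambda>x. (x, y)))"
    by (rule continuous_on_compose) (auto intro!: continuous_intros intro: continuous_on_subset[OF assms(1)] simp: assms(2))
  then show ?thesis by (simp add: o_def)
qed

lemma cont_swap:
  assumes "continuous_on (S \<times> T) (\<lambda>(x,y). H x y)"
  shows "continuous_on (T \<times> S) (\<lambda>(x,y). H y x)"
proof -
  have "continuous_on (T \<times> S) ((\<lambda>(x,y). H x y) \<circ> prod.swap)"
    by (rule continuous_on_compose) (auto intro!: continuous_intros intro: continuous_on_subset[OF assms(1)])
  then show ?thesis by (simp add: o_def case_prod_unfold)
qed

lemma cont_sub:
  assumes "continuous_on (S \<times> T) (\<lambda>(x,y). H x y)" "S' \<subseteq> S" "T' \<subseteq> T"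
  shows "continuous_on (S' \<times> T') (\<lambda>(x,y). H x y)"
  using assms continuous_on_subset by (metis Sigma_mono)

lemma PCV2:
  fixes H :: "real \<Rightarrow> real \<Rightarrow> 'a::banach"
  assumes c: "continuous_on ({0..c} \<times> {0..c}) (\<lambda>(x,y). H x y)" and t: "0 \<le> t" "t \<le> c"
  shows "continuous_on {0..t} (\<lambda>x. integral {x..t} (H x))"
proof -
  have eq: "integral {x..t} (H x) = integral {0..t} (H x) - integral {0..x} (H x)" if "x \<in> {0..t}" for x
  proof -
    have "continuous_on {0..t} (H x)" using slice1[OF c] that t continuous_on_subset by fastforce
    then have "H x integrable_on {0..t}" by (rule integrable_continuous_interval)
    then show ?thesis using Henstock_Kurzweil_Integration.integral_combine[where a=0 and c=x and b=t and f="H x"] that by (auto simp: algebra_simps)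
  qed
  have c1: "continuous_on {0..t} (\<lambda>x. integral {0..t} (H x))"
  proof -
    have "continuous_on ({0..t} \<times> cbox 0 t) (\<lambda>(x,y). H x y)"
      using cont_sub[OF c] t by auto
    then show ?thesis using integral_continuous_on_param by fastforce
  qed
  have c2: "continuous_on {0..t} (\<lambda>x. integral {0..x} (H x))"
    using PCV[OF cont_sub[OF c, of "{0..t}" "{0..t}"]] t by auto
  have "continuous_on {0..t} (\<lambda>x. integral {0..t} (H x) - integral {0..x} (H x))"
    using c1 c2 by (intro continuous_intros)
  then show ?thesis using eq continuous_on_cong by (smt (verit))
qed

lemma bound_sq:
  fixes G :: "real \<Rightarrow> real \<Rightarrow> 'a::real_normed_vector"
  assumes "continuous_on ({0..c} \<times> {0..c}) (\<lambda>(x,y). G x y)"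
  obtains M where "M \<ge> 0" "\<And>x y. x \<in> {0..c} \<Longrightarrow> y \<in> {0..c} \<Longrightarrow> norm (G x y) \<le> M"
proof -
  have "compact ((\<lambda>(x,y). G x y) ` ({0..c} \<times> {0..c}))"
    by (rule compact_continuous_image[OF assms]) (auto intro: compact_Times)
  then obtain M where "M > 0" "\<And>z. z \<in> (\<lambda>(x,y). G x y) ` ({0..c} \<times> {0..c}) \<Longrightarrow> norm z \<le> M"
    using compact_imp_bounded bounded_pos by metis
  then show ?thesis using that[of M] by force
qed

lemma cont_int: "continuous_on {a..b} f \<Longrightarrow> (f::real\<Rightarrow>'a::banach) integrable_on {a..b}"
  by (rule integrable_continuous_interval)

lemma TF:
  fixes G :: "real \<Rightarrow> real \<Rightarrow> 'a::banach"
  assumes c: "continuous_on ({0..c} \<times> {0..c}) (\<lambda>(x,y). G x y)" and t: "0 \<le> t" "t \<le> c"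
  shows "integral {0..t} (\<lambda>s. integral {0..s} (G s)) = integral {0..t} (\<lambda>r. integral {r..t} (\<lambda>s. G s r))"
proof -
  define P where "P s = integral {0..s} (G s)" for s
  define Q where "Q y r = integral {r..y} (\<lambda>s. G s r)" for y r
  define E where "E x = integral {0..x} P - integral {0..x} (Q x)" for x
  obtain M where M0: "M \<ge> 0" and M: "\<And>x y. x \<in> {0..c} \<Longrightarrow> y \<in> {0..c} \<Longrightarrow> norm (G x y) \<le> M"
    using bound_sq[OF c] by blast
  have cs: "continuous_on ({0..c} \<times> {0..c}) (\<lambda>(x,y). G y x)" using cont_swap[OF c] .
  have cP: "continuous_on {0..c} P" unfolding P_def by (rule PCV[OF c])
  have cQ: "continuous_on {0..y} (Q y)" if "0 \<le> y" "y \<le> c" for y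
    unfolding Q_def using PCV2[OF cs that] by simp
  have cGr: "continuous_on {a..b} (\<lambda>s. G s r)" if "r \<in> {0..c}" "0 \<le> a" "b \<le> c" for a b r
    using slice2[OF c that(1)] that by (auto intro: continuous_on_subset)
  have cGs: "continuous_on {a..b} (G s)" if "s \<in> {0..c}" "0 \<le> a" "b \<le> c" for a b s
    using slice1[OF c that(1)] that by (auto intro: continuous_on_subset)
  have step: "norm (E y - E x) \<le> 2 * M * (y - x)^2" if xy: "0 \<le> x" "x \<le> y" "y \<le> c" for x y
  proof -
    have cPy: "continuous_on {0..y} P" using cP xy by (auto intro: continuous_on_subset)
    have e1: "integral {0..y} P = integral {0..x} P + integral {x..y} P"
      using Henstock_Kurzweil_Integration.integral_combine[where a=0 and c=x and b=y and f=P] cont_int[OF cPy] xy by simp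
    have e2: "integral {0..y} (Q y) = integral {0..x} (Q y) + integral {x..y} (Q y)"
      using Henstock_Kurzweil_Integration.integral_combine[where a=0 and c=x and b=y and f="Q y"] cont_int[OF cQ[of y]] xy by simp
    define R where "R r = integral {x..y} (\<lambda>s. G s r)" for r
    have e3: "Q y r = Q x r + R r" if "r \<in> {0..x}" for r
    proof -
      have "(\<lambda>s. G s r) integrable_on {r..y}" using cGr[of r r y] that xy by (auto intro: cont_int)
      then show ?thesis unfolding Q_def R_def
        using Henstock_Kurzweil_Integration.integral_combine[where a=r and c=x and b=y and f="\<lambda>s. G s r"] that xy by simp
    qed
    have cRR: "continuous_on ({0..x} \<times> cbox x y) (\<lambda>(r,s). G s r)"
      using cont_sub[OF cs, of "{0..x}" "{x..y}"] xy by auto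
    have cR: "continuous_on {0..x} R"
      unfolding R_def using integral_continuous_on_param[OF cRR] by simp
    have e4: "integral {0..x} (Q y) = integral {0..x} (Q x) + integral {0..x} R"
    proof -
      have "integral {0..x} (Q y) = integral {0..x} (\<lambda>r. Q x r + R r)"
        using e3 by (intro integral_cong) auto
      also have "\<dots> = integral {0..x} (Q x) + integral {0..x} R"
        using cQ[of x] xy cR by (intro integral_add cont_int) auto
      finally show ?thesis .
    qed
    have e5: "integral {0..x} R = integral {x..y} (\<lambda>s. integral {0..x} (G s))"
    proof -
      have cc: "continuous_on (cbox (0,x) (x,y)) (\<lambda>(r,s). G s r)" using cRR by (simp add: cbox_Pair_eq)
      show ?thesis unfolding R_def using integral_swap_continuous[OF cc] by simp
    qed
    have cI: "continuous_on {x..y} (\<lambda>s. integral {0..x} (G s))"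
    proof -
      have "continuous_on ({x..y} \<times> cbox 0 x) (\<lambda>(s,r). G s r)"
        using cont_sub[OF c, of "{x..y}" "{0..x}"] xy by auto
      then show ?thesis using integral_continuous_on_param by fastforce
    qed
    have cPxy: "continuous_on {x..y} P" using cP xy by (auto intro: continuous_on_subset)
    have e6: "integral {x..y} P - integral {x..y} (\<lambda>s. integral {0..x} (G s)) = integral {x..y} (\<lambda>s. P s - integral {0..x} (G s))"
      using cPxy cI by (intro integral_diff[symmetric] cont_int)
    have eE: "E y - E x = integral {x..y} (\<lambda>s. P s - integral {0..x} (G s)) - integral {x..y} (Q y)"
      unfolding E_def using e1 e2 e4 e5 e6 by (simp add: algebra_simps)
    have b1: "norm (integral {x..y} (\<lambda>s. P s - integral {0..x} (G s))) \<le> (M * (y - x)) * (y - x)"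
    proof (rule integral_bound)
      show "x \<le> y" by fact
      show "continuous_on {x..y} (\<lambda>s. P s - integral {0..x} (G s))" using cPxy cI by (intro continuous_intros)
      fix s assume s: "s \<in> {x..y}"
      have "P s - integral {0..x} (G s) = integral {x..s} (G s)"
        unfolding P_def using Henstock_Kurzweil_Integration.integral_combine[where a=0 and c=x and b=s and f="G s"]
          cont_int[OF cGs[of s 0 s]] s xy by (auto simp: algebra_simps)
      also have "norm \<dots> \<le> M * (s - x)"
        using s xy by (intro integral_bound cGs) (auto intro!: M)
      also have "\<dots> \<le> M * (y - x)" using s M0 by (auto intro: mult_left_mono)
      finally show "norm (P s - integral {0..x} (G s)) \<le> M * (y - x)" .
    qed
    have b2: "norm (integral {x..y} (Q y)) \<le> (M * (y - x)) * (y - x)"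
    proof (rule integral_bound)
      show "x \<le> y" by fact
      show "continuous_on {x..y} (Q y)" using cQ[of y] xy by (auto intro: continuous_on_subset)
      fix r assume r: "r \<in> {x..y}"
      have "norm (Q y r) \<le> M * (y - r)" unfolding Q_def
        using r xy by (intro integral_bound cGr) (auto intro!: M)
      also have "\<dots> \<le> M * (y - x)" using r M0 by (auto intro: mult_left_mono)
      finally show "norm (Q y r) \<le> M * (y - x)" .
    qed
    have "norm (E y - E x) \<le> norm (integral {x..y} (\<lambda>s. P s - integral {0..x} (G s))) + norm (integral {x..y} (Q y))"
      unfolding eE by (rule norm_triangle_ineq4)
    also have "\<dots> \<le> 2 * M * (y - x)^2" using b1 b2 by (simp add: power2_eq_square)
    finally show ?thesis .
  qed
  have E0: "E 0 = 0" by (simp add: E_def)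
  have bnd: "norm (E t) \<le> 2 * M * t^2 / real n" if n: "n > 0" for n
  proof -
    have "(\<Sum>k<n. E (t * real (Suc k) / real n) - E (t * real k / real n)) = E (t * real n / real n) - E (t * real 0 / real n)"
      by (rule sum_lessThan_telescope)
    then have eq: "E t = (\<Sum>k<n. E (t * real (Suc k) / real n) - E (t * real k / real n))"
      using E0 n by simp
    have "norm (E t) \<le> (\<Sum>k<n. norm (E (t * real (Suc k) / real n) - E (t * real k / real n)))"
      unfolding eq by (rule norm_sum)
    also have "\<dots> \<le> (\<Sum>k<n. 2 * M * (t / real n)^2)"
    proof (rule sum_mono)
      fix k assume k: "k \<in> {..<n}"
      have d: "t * real (Suc k) / real n - t * real k / real n = t / real n"
        using n by (simp add: field_simps)
      have "real (Suc k) \<le> real n" using k by simp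
      then have "t * real (Suc k) \<le> t * real n" using t by (intro mult_left_mono) auto
      then have "t * real (Suc k) / real n \<le> t" using n by (simp add: field_simps)
      moreover have "t * real k / real n \<le> t * real (Suc k) / real n"
        using t n by (intro divide_right_mono mult_left_mono) auto
      ultimately show "norm (E (t * real (Suc k) / real n) - E (t * real k / real n)) \<le> 2 * M * (t / real n)^2"
        using step[of "t * real k / real n" "t * real (Suc k) / real n"] t n d by auto
    qed
    also have "\<dots> = 2 * M * t^2 / real n" using n by (simp add: power2_eq_square field_simps)
    finally show ?thesis .
  qed
  have "E t = 0"
  proof (rule ccontr)
    assume "E t \<noteq> 0"
    then have np: "norm (E t) > 0" by simp
    obtain n :: nat where n: "n > 2 * M * t^2 / norm (E t)" using reals_Archimedean2 by blast
    then have npos: "n > 0" using M0 np by (smt (verit) divide_nonneg_pos of_nat_0_less_iff zero_le_power2 mult_nonneg_nonneg)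
    have "2 * M * t^2 < n * norm (E t)" using n np by (simp add: field_simps)
    moreover have "norm (E t) * n \<le> 2 * M * t^2" using bnd[OF npos] npos by (simp add: field_simps)
    ultimately show False by (simp add: mult.commute)
  qed
  then show ?thesis unfolding E_def P_def Q_def by simp
qed

lemma integral_in_closed_subspace:
  fixes f :: "real \<Rightarrow> 'a::banach"
  assumes S: "subspace S" "closed S" and f: "f integrable_on {a..b}" and fS: "\<And>x. x \<in> {a..b} \<Longrightarrow> f x \<in> S"
  shows "integral {a..b} f \<in> S"
proof -
  have "integral {a..b} f \<in> closure S"
    unfolding closure_approachable
  proof (intro allI impI)
    fix e :: real assume e: "e > 0"
    from f have "(f has_integral integral {a..b} f) (cbox a b)" by (simp add: has_integral_integral)
    then obtain \<gamma> where g: "gauge \<gamma>" and \<gamma>: "\<And>p. p tagged_division_of cbox a b \<and> \<gamma> fine p \<Longrightarrow>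
        norm ((\<Sum>(x,k)\<in>p. measure lborel k *\<^sub>R f x) - integral {a..b} f) < e"
      using e unfolding has_integral by meson
    obtain p where p: "p tagged_division_of cbox a b" "\<gamma> fine p" using fine_division_exists[OF g] by blast
    have "(\<Sum>(x,k)\<in>p. measure lborel k *\<^sub>R f x) \<in> S"
    proof (rule subspace_sum[OF S(1)])
      fix xk assume "xk \<in> p"
      moreover obtain x k where "xk = (x,k)" by fastforce
      ultimately have "x \<in> cbox a b" using p(1) by (meson subsetD tagged_division_ofD(2,3))
      then show "(case xk of (x, k) \<Rightarrow> measure lborel k *\<^sub>R f x) \<in> S"
        using \<open>xk = (x,k)\<close> fS S(1) by (simp add: subspace_scale)
    qed
    then show "\<exists>y\<in>S. dist y (integral {a..b} f) < e"
      using \<gamma>[of p] p by (auto simp: dist_norm)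
  qed
  then show ?thesis using S closure_closed by auto
qed




lemma CL:
  fixes A :: "'z::banach \<Rightarrow> 'z" and f :: "real \<Rightarrow> 'z"
  assumes clo: "closed_linear_operator D A" and cf: "continuous_on {a..b} f"
    and cAf: "continuous_on {a..b} (\<lambda>s. A (f s))" and fD: "\<And>s. s\<in>{a..b} \<Longrightarrow> f s \<in> D"
  shows "integral {a..b} f \<in> D \<and> A (integral {a..b} f) = integral {a..b} (\<lambda>s. A (f s))"
proof -
  let ?G = "{(x, A x) | x. x \<in> D}"
  have sD: "subspace D" and Aadd: "\<And>x y. x\<in>D \<Longrightarrow> y\<in>D \<Longrightarrow> A (x + y) = A x + A y"
    and Ascale: "\<And>c x. x\<in>D \<Longrightarrow> A (c *\<^sub>R x) = c *\<^sub>R A x" and cl: "closed ?G"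
    using clo unfolding closed_linear_operator_def by auto
  have sub: "subspace ?G"
    unfolding subspace_def
  proof (intro conjI allI ballI)
    have "0 \<in> D" using sD by (simp add: subspace_0)
    moreover have "A 0 = 0" using Ascale[of 0 0] \<open>0 \<in> D\<close> by simp
    ultimately show "0 \<in> ?G" by (metis (mono_tags, lifting) mem_Collect_eq zero_prod_def)
  next
    fix x y assume "x \<in> ?G" "y \<in> ?G"
    then obtain x0 y0 where xy: "x = (x0, A x0)" "y = (y0, A y0)" "x0 \<in> D" "y0 \<in> D" by blast
    then have "x + y = (x0 + y0, A (x0 + y0))" "x0 + y0 \<in> D" using Aadd sD subspace_add by auto
    then show "x + y \<in> ?G" by blast
  next
    fix c :: real and x assume "x \<in> ?G"
    then obtain x0 where xy: "x = (x0, A x0)" "x0 \<in> D" by blast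
    then have "c *\<^sub>R x = (c *\<^sub>R x0, A (c *\<^sub>R x0))" "c *\<^sub>R x0 \<in> D" using Ascale sD subspace_scale by auto
    then show "c *\<^sub>R x \<in> ?G" by blast
  qed
  define h where "h s = (f s, A (f s))" for s
  have ch: "continuous_on {a..b} h" unfolding h_def using cf cAf by (intro continuous_intros)
  have ih: "h integrable_on {a..b}" using integrable_continuous_interval[OF ch] .
  have "integral {a..b} h \<in> ?G"
    by (rule integral_in_closed_subspace[OF sub cl ih]) (use fD in \<open>auto simp: h_def\<close>)
  then obtain x0 where x0: "integral {a..b} h = (x0, A x0)" "x0 \<in> D" by blast
  have "fst (integral {a..b} h) = integral {a..b} f"
    using integral_linear[OF ih bounded_linear_fst] by (simp add: o_def h_def)
  moreover have "snd (integral {a..b} h) = integral {a..b} (\<lambda>s. A (f s))"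
    using integral_linear[OF ih bounded_linear_snd] by (simp add: o_def h_def)
  ultimately show ?thesis using x0 by simp
qed




lemma cont_coeff:
  fixes C :: "'m::topological_space \<Rightarrow> ('z::banach \<Rightarrow>\<^sub>L 'z)" and phi :: "real \<Rightarrow> 'm \<Rightarrow> 'm"
  assumes C: "continuous_on UNIV (\<lambda>(w,z). blinfun_apply (C w) z)"
    and ph: "continuous_on ({0..} \<times> UNIV) (\<lambda>(t,w). phi t w)"
    and p: "continuous_on S p" "p ` S \<subseteq> {0..}" and q: "continuous_on S q"
  shows "continuous_on S (\<lambda>x. C (phi (p x) w) (q x))"
proof -
  have c0: "continuous_on S (\<lambda>x. (p x, w))" using p(1) by (intro continuous_intros)
  have im: "(\<lambda>x. (p x, w)) ` S \<subseteq> {0..} \<times> UNIV" using p(2) by auto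
  have c1: "continuous_on S ((\<lambda>(t,w). phi t w) \<circ> (\<lambda>x. (p x, w)))"
    by (rule continuous_on_compose[OF c0 continuous_on_subset[OF ph im]])
  then have c1': "continuous_on S (\<lambda>x. phi (p x) w)" by (simp add: o_def)
  have c2: "continuous_on S (\<lambda>x. (phi (p x) w, q x))" using c1' q by (intro continuous_on_Pair)
  have "continuous_on S ((\<lambda>(w,z). blinfun_apply (C w) z) \<circ> (\<lambda>x. (phi (p x) w, q x)))"
    by (rule continuous_on_compose[OF c2 continuous_on_subset[OF C]]) simp
  then show ?thesis by (simp add: o_def)
qed

lemma semiflow_cont: "semiflow phi \<Longrightarrow> continuous_on ({0..} \<times> UNIV) (\<lambda>(t,w). phi t w)"
  unfolding semiflow_def by auto

lemma closed_op_facts: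
  assumes "closed_linear_operator D A"
  shows "subspace D" "\<And>x y. x\<in>D \<Longrightarrow> y\<in>D \<Longrightarrow> A (x + y) = A x + A y"
    "\<And>x. x\<in>D \<Longrightarrow> A (- x) = - A x" "\<And>x y. x\<in>D \<Longrightarrow> y\<in>D \<Longrightarrow> A (x - y) = A x - A y"
    "\<And>x. x \<in> D \<Longrightarrow> - x \<in> D" "\<And>x y. x\<in>D \<Longrightarrow> y\<in>D \<Longrightarrow> x + y \<in> D" "\<And>x y. x\<in>D \<Longrightarrow> y\<in>D \<Longrightarrow> x - y \<in> D"
proof -
  have sD: "subspace D" and Aadd: "\<And>x y. x\<in>D \<Longrightarrow> y\<in>D \<Longrightarrow> A (x + y) = A x + A y"
    and Ascale: "\<And>c x. x\<in>D \<Longrightarrow> A (c *\<^sub>R x) = c *\<^sub>R A x"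
    using assms unfolding closed_linear_operator_def by auto
  show "subspace D" by fact
  show "\<And>x y. x\<in>D \<Longrightarrow> y\<in>D \<Longrightarrow> A (x + y) = A x + A y" by fact
  show an: "A (- x) = - A x" if "x\<in>D" for x
  proof -
    have "A ((-1) *\<^sub>R x) = (-1) *\<^sub>R A x" by (rule Ascale[OF that])
    then show ?thesis by simp
  qed
  show nD: "\<And>x. x \<in> D \<Longrightarrow> - x \<in> D" using sD by (simp add: subspace_neg)
  show "\<And>x y. x\<in>D \<Longrightarrow> y\<in>D \<Longrightarrow> x + y \<in> D" using sD by (simp add: subspace_add)
  show "\<And>x y. x\<in>D \<Longrightarrow> y\<in>D \<Longrightarrow> x - y \<in> D" using sD by (simp add: subspace_diff)
  show "A (x - y) = A x - A y" if "x\<in>D" "y\<in>D" for x y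
  proof -
    have "A (x + - y) = A x + A (- y)" using Aadd[OF that(1) nD[OF that(2)]] .
    then show ?thesis using an[OF that(2)] by simp
  qed
qed

lemma mild_cong:
  assumes "mild_sol phi D A B L g w a0 b u" "\<And>t. t \<in> {a0..b} \<Longrightarrow> v t = u t"
  shows "mild_sol phi D A B L g w a0 b v"
  unfolding mild_sol_def
proof (intro conjI ballI)
  have "continuous_on {a0..b} u" using assms(1) unfolding mild_sol_def by blast
  then show "continuous_on {a0..b} v" using assms(2) continuous_on_cong[of "{a0..b}" "{a0..b}" v u] by simp
  fix t assume t: "t \<in> {a0..b}"
  have sub: "{a0..t} \<subseteq> {a0..b}" using t by auto
  have i1: "integral {a0..t} (\<lambda>s. B (phi s w) (v s)) = integral {a0..t} (\<lambda>s. B (phi s w) (u s))"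
    using assms(2) sub by (intro integral_cong) auto
  have i2: "integral {a0..t} (\<lambda>s. L (phi s w) (v s) + g s) = integral {a0..t} (\<lambda>s. L (phi s w) (u s) + g s)"
    using assms(2) sub by (intro integral_cong) auto
  have a0: "a0 \<in> {a0..b}" using t by auto
  from assms(1) t have m: "integral {a0..t} (\<lambda>s. B (phi s w) (u s)) \<in> D"
      "u t = u a0 + A (integral {a0..t} (\<lambda>s. B (phi s w) (u s))) + integral {a0..t} (\<lambda>s. L (phi s w) (u s) + g s)"
    unfolding mild_sol_def by blast+
  show "integral {a0..t} (\<lambda>s. B (phi s w) (v s)) \<in> D" using m i1 by simp
  show "v t = v a0 + A (integral {a0..t} (\<lambda>s. B (phi s w) (v s))) + integral {a0..t} (\<lambda>s. L (phi s w) (v s) + g s)"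
    using m i1 i2 assms(2)[OF t] assms(2)[OF a0] by simp
qed

lemma mild_restrict:
  assumes "mild_sol phi D A B L g w a0 b u" "b' \<le> b"
  shows "mild_sol phi D A B L g w a0 b' u"
proof -
  have sub: "{a0..b'} \<subseteq> {a0..b}" using assms(2) by auto
  from assms(1) have c: "continuous_on {a0..b} u" and m: "\<forall>t\<in>{a0..b}.
        integral {a0..t} (\<lambda>s. B (phi s w) (u s)) \<in> D \<and>
        u t = u a0 + A (integral {a0..t} (\<lambda>s. B (phi s w) (u s)))
              + integral {a0..t} (\<lambda>s. L (phi s w) (u s) + g s)" unfolding mild_sol_def by blast+
  have "continuous_on {a0..b'} u" using continuous_on_subset[OF c sub] .
  then show ?thesis unfolding mild_sol_def using m sub by blast
qed

lemma tri_slice: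
  assumes "continuous_on S (\<lambda>(s,r). K s r)" "\<And>r. r \<in> R \<Longrightarrow> (s0, r) \<in> S"
  shows "continuous_on R (K s0)"
proof -
  have "continuous_on R ((\<lambda>(s,r). K s r) \<circ> (\<lambda>r. (s0, r)))"
    by (rule continuous_on_compose) (auto intro!: continuous_intros intro: continuous_on_subset[OF assms(1)] assms(2))
  then show ?thesis by (simp add: o_def)
qed

lemma SPL:
  fixes G :: "real \<Rightarrow> real \<Rightarrow> 'a::banach"
  assumes c: "continuous_on ({0..a} \<times> {0..a}) (\<lambda>(x,y). G x y)" and t: "0 \<le> t" "t \<le> a"
  shows "integral {0..t} (\<lambda>s. integral {s..a} (G s)) = integral {0..t} (\<lambda>r. integral {0..r} (\<lambda>s. G s r)) + integral {t..a} (\<lambda>r. integral {0..t} (\<lambda>s. G s r))"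
proof -
  have sp: "integral {s..a} (G s) = integral {s..t} (G s) + integral {t..a} (G s)" if s: "s \<in> {0..t}" for s
  proof -
    have "continuous_on {s..a} (G s)" using slice1[OF c, of s] s t by (auto intro: continuous_on_subset)
    then show ?thesis using Henstock_Kurzweil_Integration.integral_combine[where a=s and c=t and b=a and f="G s"] s t cont_int[of s a "G s"] by auto
  qed
  have c1: "continuous_on {0..t} (\<lambda>s. integral {s..t} (G s))" using PCV2[OF c t] .
  have c2: "continuous_on {0..t} (\<lambda>s. integral {t..a} (G s))"
  proof -
    have "continuous_on ({0..t} \<times> cbox t a) (\<lambda>(x,y). G x y)" using cont_sub[OF c, of "{0..t}" "{t..a}"] t by auto
    then show ?thesis using integral_continuous_on_param by fastforce
  qed
  have "integral {0..t} (\<lambda>s. integral {s..a} (G s)) = integral {0..t} (\<lambda>s. integral {s..t} (G s) + integral {t..a} (G s))"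
    using sp by (intro integral_cong) auto
  also have "\<dots> = integral {0..t} (\<lambda>s. integral {s..t} (G s)) + integral {0..t} (\<lambda>s. integral {t..a} (G s))"
    using c1 c2 by (intro integral_add cont_int)
  also have "integral {0..t} (\<lambda>s. integral {s..t} (G s)) = integral {0..t} (\<lambda>r. integral {0..r} (\<lambda>s. G s r))"
    using TF[OF cont_swap[OF c] t] by simp
  also have "integral {0..t} (\<lambda>s. integral {t..a} (G s)) = integral {t..a} (\<lambda>r. integral {0..t} (\<lambda>s. G s r))"
  proof -
    have cc: "continuous_on (cbox (0,t) (t,a)) (\<lambda>(x,y). G x y)"
      using cont_sub[OF c, of "{0..t}" "{t..a}"] t by (simp add: cbox_Pair_eq)
    show ?thesis using integral_swap_continuous[OF cc] by simp
  qed
  finally show ?thesis .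
qed

context
  fixes phi :: "real \<Rightarrow> 'm::topological_space \<Rightarrow> 'm" and D :: "'z::banach set" and A :: "'z \<Rightarrow> 'z"
    and B L :: "'m \<Rightarrow> ('z \<Rightarrow>\<^sub>L 'z)"
  assumes sf: "semiflow phi" and clo: "closed_linear_operator D A"
    and Bc: "continuous_on UNIV (\<lambda>(w, z). blinfun_apply (B w) z)"
    and Lc: "continuous_on UNIV (\<lambda>(w, z). blinfun_apply (L w) z)"
begin

lemma sf_add: "t \<ge> 0 \<Longrightarrow> s \<ge> 0 \<Longrightarrow> phi (t + s) w = phi t (phi s w)"
  using sf unfolding semiflow_def by blast

lemma sf0: "phi 0 w = w"
  using sf unfolding semiflow_def by blast

lemma cB: "continuous_on S p \<Longrightarrow> p ` S \<subseteq> {0..} \<Longrightarrow> continuous_on S q \<Longrightarrow> continuous_on S (\<lambda>x. B (phi (p x) w) (q x))"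
  by (rule cont_coeff[OF Bc semiflow_cont[OF sf]])

lemma cL: "continuous_on S p \<Longrightarrow> p ` S \<subseteq> {0..} \<Longrightarrow> continuous_on S q \<Longrightarrow> continuous_on S (\<lambda>x. L (phi (p x) w) (q x))"
  by (rule cont_coeff[OF Lc semiflow_cont[OF sf]])

lemma cB1: "continuous_on {a..b} u \<Longrightarrow> 0 \<le> a \<Longrightarrow> continuous_on {a..b} (\<lambda>s. B (phi s w) (u s))"
  using cB[of "{a..b}" "\<lambda>s. s" u w] by (auto intro: continuous_on_id)

lemma cL1: "continuous_on {a..b} u \<Longrightarrow> 0 \<le> a \<Longrightarrow> continuous_on {a..b} (\<lambda>s. L (phi s w) (u s))"
  using cL[of "{a..b}" "\<lambda>s. s" u w] by (auto intro: continuous_on_id)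

lemma mild_add:
  assumes a0: "0 \<le> a0" and g1: "continuous_on {a0..b} g1" and g2: "continuous_on {a0..b} g2"
    and m1: "mild_sol phi D A B L g1 w a0 b u1" and m2: "mild_sol phi D A B L g2 w a0 b u2"
  shows "mild_sol phi D A B L (\<lambda>s. g1 s + g2 s) w a0 b (\<lambda>s. u1 s + u2 s)"
  unfolding mild_sol_def
proof (intro conjI ballI)
  have c1: "continuous_on {a0..b} u1" using m1 unfolding mild_sol_def by blast
  have c2: "continuous_on {a0..b} u2" using m2 unfolding mild_sol_def by blast
  show "continuous_on {a0..b} (\<lambda>s. u1 s + u2 s)" using c1 c2 by (intro continuous_intros)
  fix t assume t: "t \<in> {a0..b}"
  have sub: "{a0..t} \<subseteq> {a0..b}" using t by auto
  have a0i: "a0 \<in> {a0..b}" using t by auto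
  have c1t: "continuous_on {a0..t} u1" using continuous_on_subset[OF c1 sub] .
  have c2t: "continuous_on {a0..t} u2" using continuous_on_subset[OF c2 sub] .
  have g1t: "continuous_on {a0..t} g1" using continuous_on_subset[OF g1 sub] .
  have g2t: "continuous_on {a0..t} g2" using continuous_on_subset[OF g2 sub] .
  from m1 t have m1t: "integral {a0..t} (\<lambda>s. B (phi s w) (u1 s)) \<in> D"
      "u1 t = u1 a0 + A (integral {a0..t} (\<lambda>s. B (phi s w) (u1 s))) + integral {a0..t} (\<lambda>s. L (phi s w) (u1 s) + g1 s)"
    unfolding mild_sol_def by blast+
  from m2 t have m2t: "integral {a0..t} (\<lambda>s. B (phi s w) (u2 s)) \<in> D"
      "u2 t = u2 a0 + A (integral {a0..t} (\<lambda>s. B (phi s w) (u2 s))) + integral {a0..t} (\<lambda>s. L (phi s w) (u2 s) + g2 s)"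
    unfolding mild_sol_def by blast+
  have iB: "integral {a0..t} (\<lambda>s. B (phi s w) (u1 s + u2 s)) = integral {a0..t} (\<lambda>s. B (phi s w) (u1 s)) + integral {a0..t} (\<lambda>s. B (phi s w) (u2 s))"
    unfolding blinfun.add_right using c1t c2t a0 by (intro integral_add cont_int cB1)
  have iL: "integral {a0..t} (\<lambda>s. L (phi s w) (u1 s + u2 s) + (g1 s + g2 s)) = integral {a0..t} (\<lambda>s. L (phi s w) (u1 s) + g1 s) + integral {a0..t} (\<lambda>s. L (phi s w) (u2 s) + g2 s)"
  proof -
    have "integral {a0..t} (\<lambda>s. L (phi s w) (u1 s + u2 s) + (g1 s + g2 s)) = integral {a0..t} (\<lambda>s. (L (phi s w) (u1 s) + g1 s) + (L (phi s w) (u2 s) + g2 s))"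
      by (simp add: blinfun.add_right algebra_simps)
    also have "\<dots> = integral {a0..t} (\<lambda>s. L (phi s w) (u1 s) + g1 s) + integral {a0..t} (\<lambda>s. L (phi s w) (u2 s) + g2 s)"
      using c1t c2t g1t g2t a0 by (intro integral_add cont_int continuous_intros cL1)
    finally show ?thesis .
  qed
  show "integral {a0..t} (\<lambda>s. B (phi s w) (u1 s + u2 s)) \<in> D"
    unfolding iB using closed_op_facts(6)[OF clo] m1t(1) m2t(1) by blast
  show "u1 t + u2 t = u1 a0 + u2 a0 + A (integral {a0..t} (\<lambda>s. B (phi s w) (u1 s + u2 s))) + integral {a0..t} (\<lambda>s. L (phi s w) (u1 s + u2 s) + (g1 s + g2 s))"
    unfolding iB iL closed_op_facts(2)[OF clo m1t(1) m2t(1)] using m1t(2) m2t(2) by (simp add: algebra_simps)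
qed

lemma mild_neg:
  assumes m: "mild_sol phi D A B L g w a0 b u"
  shows "mild_sol phi D A B L (\<lambda>s. - g s) w a0 b (\<lambda>s. - u s)"
  unfolding mild_sol_def
proof (intro conjI ballI)
  have c1: "continuous_on {a0..b} u" using m unfolding mild_sol_def by blast
  show "continuous_on {a0..b} (\<lambda>s. - u s)" using c1 by (intro continuous_intros)
  fix t assume t: "t \<in> {a0..b}"
  from m t have mt: "integral {a0..t} (\<lambda>s. B (phi s w) (u s)) \<in> D"
      "u t = u a0 + A (integral {a0..t} (\<lambda>s. B (phi s w) (u s))) + integral {a0..t} (\<lambda>s. L (phi s w) (u s) + g s)"
    unfolding mild_sol_def by blast+
  have iB: "integral {a0..t} (\<lambda>s. B (phi s w) (- u s)) = - integral {a0..t} (\<lambda>s. B (phi s w) (u s))"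
    unfolding blinfun.minus_right by simp
  have iL: "integral {a0..t} (\<lambda>s. L (phi s w) (- u s) + - g s) = - integral {a0..t} (\<lambda>s. L (phi s w) (u s) + g s)"
    unfolding blinfun.minus_right by (simp add: integral_neg[symmetric] del: integral_neg)
  show "integral {a0..t} (\<lambda>s. B (phi s w) (- u s)) \<in> D"
    unfolding iB using closed_op_facts(5)[OF clo] mt(1) by blast
  show "- u t = - u a0 + A (integral {a0..t} (\<lambda>s. B (phi s w) (- u s))) + integral {a0..t} (\<lambda>s. L (phi s w) (- u s) + - g s)"
    unfolding iB iL closed_op_facts(3)[OF clo mt(1)] using mt(2) by (simp add: algebra_simps)
qed

lemma mild_shift:
  assumes r: "0 \<le> r" and m: "mild_sol phi D A B L g (phi r w) 0 b u"
  shows "mild_sol phi D A B L (\<lambda>s. g (s - r)) w r (r + b) (\<lambda>s. u (s - r))"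
  unfolding mild_sol_def
proof (intro conjI ballI)
  have c1: "continuous_on {0..b} u" using m unfolding mild_sol_def by blast
  have "continuous_on {r..r+b} (u \<circ> (\<lambda>s. s - r))"
    by (rule continuous_on_compose) (auto intro!: continuous_intros intro: continuous_on_subset[OF c1])
  then show "continuous_on {r..r + b} (\<lambda>s. u (s - r))" by (simp add: o_def)
  fix t assume t: "t \<in> {r..r+b}"
  define \<tau> where "\<tau> = t - r"
  have \<tau>: "\<tau> \<in> {0..b}" using t by (auto simp: \<tau>_def)
  have tt: "t = \<tau> + r" by (simp add: \<tau>_def)
  have shift: "integral {r..t} (\<lambda>s. f (phi s w) (u (s - r)) + h (s - r)) = integral {0..\<tau>} (\<lambda>s. f (phi s (phi r w)) (u s) + h s)"
    for f :: "'m \<Rightarrow> 'z \<Rightarrow>\<^sub>L 'z" and h :: "real \<Rightarrow> 'z"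
  proof -
    have "integral {0..\<tau>} ((\<lambda>s. f (phi s w) (u (s - r)) + h (s - r)) \<circ> (+) r) = integral {0+r..\<tau>+r} (\<lambda>s. f (phi s w) (u (s - r)) + h (s - r))"
      by (rule integral_shift_Icc_real)
    moreover have "integral {0..\<tau>} ((\<lambda>s. f (phi s w) (u (s - r)) + h (s - r)) \<circ> (+) r) = integral {0..\<tau>} (\<lambda>s. f (phi s (phi r w)) (u s) + h s)"
    proof (rule integral_cong)
      fix s assume "s \<in> {0..\<tau>}"
      then have "phi (r + s) w = phi s (phi r w)" using sf_add[of s r w] r by (simp add: add.commute)
      then show "((\<lambda>s. f (phi s w) (u (s - r)) + h (s - r)) \<circ> (+) r) s = f (phi s (phi r w)) (u s) + h s" by simp
    qed
    ultimately show ?thesis using tt by simp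
  qed
  have sB: "integral {r..t} (\<lambda>s. B (phi s w) (u (s - r))) = integral {0..\<tau>} (\<lambda>s. B (phi s (phi r w)) (u s))"
    using shift[of B "\<lambda>_. 0"] by simp
  have sL: "integral {r..t} (\<lambda>s. L (phi s w) (u (s - r)) + g (s - r)) = integral {0..\<tau>} (\<lambda>s. L (phi s (phi r w)) (u s) + g s)"
    using shift[of L g] by simp
  from m \<tau> have mt: "integral {0..\<tau>} (\<lambda>s. B (phi s (phi r w)) (u s)) \<in> D"
      "u \<tau> = u 0 + A (integral {0..\<tau>} (\<lambda>s. B (phi s (phi r w)) (u s))) + integral {0..\<tau>} (\<lambda>s. L (phi s (phi r w)) (u s) + g s)"
    unfolding mild_sol_def by blast+
  show "integral {r..t} (\<lambda>s. B (phi s w) (u (s - r))) \<in> D" using sB mt by simp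
  show "u (t - r) = u (r - r) + A (integral {r..t} (\<lambda>s. B (phi s w) (u (s - r)))) + integral {r..t} (\<lambda>s. L (phi s w) (u (s - r)) + g (s - r))"
    using sB sL mt by (simp add: \<tau>_def)
qed


lemma cGsq:
  fixes Kt :: "real \<Rightarrow> real \<Rightarrow> 'z"
  assumes "continuous_on ({0..a} \<times> {0..a}) (\<lambda>(s,r). Kt s r)"
  shows "continuous_on ({0..a} \<times> {0..a}) (\<lambda>(s,r). B (phi s w) (Kt s r))"
    "continuous_on ({0..a} \<times> {0..a}) (\<lambda>(s,r). L (phi s w) (Kt s r))"
proof -
  have p: "continuous_on ({0..a} \<times> {0..a}) (fst :: real \<times> real \<Rightarrow> real)" by (intro continuous_intros)
  have pi: "fst ` ({0..a} \<times> {0..a}) \<subseteq> {0::real..}" by auto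
  show "continuous_on ({0..a} \<times> {0..a}) (\<lambda>(s,r). B (phi s w) (Kt s r))"
    using cB[OF p pi assms, of w] by (simp add: case_prod_unfold)
  show "continuous_on ({0..a} \<times> {0..a}) (\<lambda>(s,r). L (phi s w) (Kt s r))"
    using cL[OF p pi assms, of w] by (simp add: case_prod_unfold)
qed

lemma blin_int:
  fixes f :: "real \<Rightarrow> 'z"
  assumes "continuous_on {a..b} f"
  shows "blinfun_apply M (integral {a..b} f) = integral {a..b} (\<lambda>s. M (f s))"
  using integral_linear[OF cont_int[OF assms] blinfun.bounded_linear_right, of M] by (simp add: o_def)

lemma FD:
  fixes K :: "real \<Rightarrow> real \<Rightarrow> 'z" and h :: "real \<Rightarrow> 'z"
  assumes a: "0 \<le> a"
    and cK: "continuous_on {(s,r). 0 \<le> r \<and> r \<le> s \<and> s \<le> a} (\<lambda>(s,r). K s r)"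
    and ch: "continuous_on {0..a} h"
    and mK: "\<And>r. r \<in> {0..a} \<Longrightarrow> mild_sol phi D A B L (\<lambda>_. 0) w r a (\<lambda>s. K s r)"
    and Kd: "\<And>r. r \<in> {0..a} \<Longrightarrow> K r r = h r"
  shows "mild_sol phi D A B L h w 0 a (\<lambda>t. integral {0..t} (K t))"
proof -
  define Kt where "Kt s r = K (max s r) r" for s r
  have cKt: "continuous_on ({0..a} \<times> {0..a}) (\<lambda>(s,r). Kt s r)"
  proof -
    have "continuous_on ({0..a} \<times> {0..a}) ((\<lambda>(s,r). K s r) \<circ> (\<lambda>(s,r). (max s r, r)))"
    proof (rule continuous_on_compose)
      show "continuous_on ({0..a} \<times> {0..a}) (\<lambda>(s, r). (max s r, r::real))"
        unfolding case_prod_unfold by (intro continuous_intros)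
      show "continuous_on ((\<lambda>(s, r). (max s r, r)) ` ({0..a} \<times> {0..a})) (\<lambda>(s, r). K s r)"
        by (rule continuous_on_subset[OF cK]) auto
    qed
    then show ?thesis by (simp add: Kt_def o_def case_prod_unfold)
  qed
  define GB where "GB s r = B (phi s w) (Kt s r)" for s r
  define GL where "GL s r = L (phi s w) (Kt s r)" for s r
  have cGB: "continuous_on ({0..a} \<times> {0..a}) (\<lambda>(s,r). GB s r)" unfolding GB_def by (rule cGsq(1)[OF cKt])
  have cGL: "continuous_on ({0..a} \<times> {0..a}) (\<lambda>(s,r). GL s r)" unfolding GL_def by (rule cGsq(2)[OF cKt])
  define F where "F t = integral {0..t} (K t)" for t
  have FKt: "F t = integral {0..t} (Kt t)" if "t \<in> {0..a}" for t
    unfolding F_def Kt_def by (rule integral_cong) auto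
  have cF: "continuous_on {0..a} F"
    using PCV[OF cKt] FKt continuous_on_cong[of "{0..a}" "{0..a}" F "\<lambda>x. integral {0..x} (Kt x)"] by simp
  have F0: "F 0 = 0" by (simp add: F_def)
  have cKts: "continuous_on {0..s} (Kt s)" if "s \<in> {0..a}" for s
    using slice1[OF cKt that] that by (auto intro: continuous_on_subset)
  have BF: "B (phi s w) (F s) = integral {0..s} (GB s)" if "s \<in> {0..a}" for s
    unfolding FKt[OF that] GB_def by (rule blin_int[OF cKts[OF that]])
  have LF: "L (phi s w) (F s) = integral {0..s} (GL s)" if "s \<in> {0..a}" for s
    unfolding FKt[OF that] GL_def by (rule blin_int[OF cKts[OF that]])
  show ?thesis
    unfolding mild_sol_def
  proof (intro conjI ballI)
    show "continuous_on {0..a} (\<lambda>t. integral {0..t} (K t))" using cF by (simp add: F_def[abs_def])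
    fix t assume t: "t \<in> {0..a}"
    have sub: "{0..t} \<subseteq> {0..a}" using t by auto
    define I where "I r = integral {r..t} (\<lambda>s. GB s r)" for r
    define J where "J r = integral {r..t} (\<lambda>s. GL s r)" for r
    have e1: "integral {0..t} (\<lambda>s. B (phi s w) (F s)) = integral {0..t} I"
    proof -
      have "integral {0..t} (\<lambda>s. B (phi s w) (F s)) = integral {0..t} (\<lambda>s. integral {0..s} (GB s))"
        using BF sub by (intro integral_cong) auto
      also have "\<dots> = integral {0..t} I" unfolding I_def using TF[OF cGB] t by auto
      finally show ?thesis .
    qed
    have e2: "integral {0..t} (\<lambda>s. L (phi s w) (F s)) = integral {0..t} J"
    proof -
      have "integral {0..t} (\<lambda>s. L (phi s w) (F s)) = integral {0..t} (\<lambda>s. integral {0..s} (GL s))"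
        using LF sub by (intro integral_cong) auto
      also have "\<dots> = integral {0..t} J" unfolding J_def using TF[OF cGL] t by auto
      finally show ?thesis .
    qed
    have IJ: "I r \<in> D \<and> A (I r) = Kt t r - h r - J r" if r: "r \<in> {0..t}" for r
    proof -
      have ra: "r \<in> {0..a}" and tr: "t \<in> {r..a}" using r t by auto
      have i1: "I r = integral {r..t} (\<lambda>s. B (phi s w) (K s r))"
        unfolding I_def GB_def Kt_def by (rule integral_cong) auto
      have j1: "J r = integral {r..t} (\<lambda>s. L (phi s w) (K s r) + 0)"
        unfolding J_def GL_def Kt_def by (rule integral_cong) auto
      from mK[OF ra] tr have mt: "integral {r..t} (\<lambda>s. B (phi s w) (K s r)) \<in> D"
        "K t r = K r r + A (integral {r..t} (\<lambda>s. B (phi s w) (K s r))) + integral {r..t} (\<lambda>s. L (phi s w) (K s r) + 0)"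
        unfolding mild_sol_def by blast+
      have "max t r = t" using r by simp
      then have "Kt t r = K t r" unfolding Kt_def by simp
      then show ?thesis using mt i1 j1 Kd[OF ra] by (simp add: algebra_simps)
    qed
    have cGBs: "continuous_on ({0..a} \<times> {0..a}) (\<lambda>(r,s). GB s r)" using cont_swap[OF cGB] .
    have cGLs: "continuous_on ({0..a} \<times> {0..a}) (\<lambda>(r,s). GL s r)" using cont_swap[OF cGL] .
    have cI: "continuous_on {0..t} I" unfolding I_def using PCV2[OF cGBs] t by simp
    have cJ: "continuous_on {0..t} J" unfolding J_def using PCV2[OF cGLs] t by simp
    have cKtt: "continuous_on {0..t} (Kt t)" using slice1[OF cKt t] sub by (auto intro: continuous_on_subset)
    have cht: "continuous_on {0..t} h" using continuous_on_subset[OF ch sub] .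
    have cR: "continuous_on {0..t} (\<lambda>r. Kt t r - h r - J r)" using cKtt cht cJ by (intro continuous_intros)
    have cAI: "continuous_on {0..t} (\<lambda>r. A (I r))"
      using cR IJ continuous_on_cong[of "{0..t}" "{0..t}" "\<lambda>r. A (I r)" "\<lambda>r. Kt t r - h r - J r"] by simp
    have CLr: "integral {0..t} I \<in> D \<and> A (integral {0..t} I) = integral {0..t} (\<lambda>r. A (I r))"
      by (rule CL[OF clo cI cAI]) (use IJ in blast)
    have AI: "A (integral {0..t} I) = F t - integral {0..t} h - integral {0..t} J"
    proof -
      have "integral {0..t} (\<lambda>r. A (I r)) = integral {0..t} (\<lambda>r. Kt t r - h r - J r)"
        using IJ by (intro integral_cong) auto
      also have "\<dots> = integral {0..t} (Kt t) - integral {0..t} h - integral {0..t} J"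
        using cKtt cht cJ by (simp add: integral_diff cont_int continuous_intros)
      finally show ?thesis using CLr FKt[OF t] by simp
    qed
    have cLF: "continuous_on {0..t} (\<lambda>s. L (phi s w) (F s))"
      using cL1[OF continuous_on_subset[OF cF sub]] by simp
    have e3: "integral {0..t} (\<lambda>s. L (phi s w) (F s) + h s) = integral {0..t} J + integral {0..t} h"
      using e2 cLF cht by (simp add: integral_add cont_int)
    show "integral {0..t} (\<lambda>s. B (phi s w) (integral {0..s} (K s))) \<in> D"
      using e1 CLr by (simp add: F_def[symmetric])
    show "integral {0..t} (K t) = integral {0..0} (K 0) + A (integral {0..t} (\<lambda>s. B (phi s w) (integral {0..s} (K s)))) + integral {0..t} (\<lambda>s. L (phi s w) (integral {0..s} (K s)) + h s)"
      using e1 e3 AI F0 unfolding F_def by simp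
  qed
qed


lemma BD:
  fixes K :: "real \<Rightarrow> real \<Rightarrow> 'z" and h :: "real \<Rightarrow> 'z"
  assumes a: "0 \<le> a"
    and cK: "continuous_on {(s,r). 0 \<le> s \<and> s \<le> r \<and> r \<le> a} (\<lambda>(s,r). K s r)"
    and ch: "continuous_on {0..a} h"
    and mK: "\<And>r. r \<in> {0..a} \<Longrightarrow> mild_sol phi D A B L (\<lambda>_. 0) w 0 r (\<lambda>s. K s r)"
    and Kd: "\<And>r. r \<in> {0..a} \<Longrightarrow> K r r = h r"
  shows "mild_sol phi D A B L h w 0 a (\<lambda>t. - integral {t..a} (K t))"
proof -
  define Kt where "Kt s r = K (min s r) r" for s r
  have cKt: "continuous_on ({0..a} \<times> {0..a}) (\<lambda>(s,r). Kt s r)"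
  proof -
    have "continuous_on ({0..a} \<times> {0..a}) ((\<lambda>(s,r). K s r) \<circ> (\<lambda>(s,r). (min s r, r)))"
    proof (rule continuous_on_compose)
      show "continuous_on ({0..a} \<times> {0..a}) (\<lambda>(s, r). (min s r, r::real))"
        unfolding case_prod_unfold by (intro continuous_intros)
      show "continuous_on ((\<lambda>(s, r). (min s r, r)) ` ({0..a} \<times> {0..a})) (\<lambda>(s, r). K s r)"
        by (rule continuous_on_subset[OF cK]) auto
    qed
    then show ?thesis by (simp add: Kt_def o_def case_prod_unfold)
  qed
  define GB where "GB s r = B (phi s w) (Kt s r)" for s r
  define GL where "GL s r = L (phi s w) (Kt s r)" for s r
  have cGB: "continuous_on ({0..a} \<times> {0..a}) (\<lambda>(s,r). GB s r)" unfolding GB_def by (rule cGsq(1)[OF cKt])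
  have cGL: "continuous_on ({0..a} \<times> {0..a}) (\<lambda>(s,r). GL s r)" unfolding GL_def by (rule cGsq(2)[OF cKt])
  have cGBs: "continuous_on ({0..a} \<times> {0..a}) (\<lambda>(r,s). GB s r)" using cont_swap[OF cGB] .
  have cGLs: "continuous_on ({0..a} \<times> {0..a}) (\<lambda>(r,s). GL s r)" using cont_swap[OF cGL] .
  define Y where "Y t = - integral {t..a} (K t)" for t
  have YKt: "Y t = - integral {t..a} (Kt t)" if "t \<in> {0..a}" for t
    unfolding Y_def Kt_def by (simp, rule integral_cong) auto
  have cY: "continuous_on {0..a} Y"
  proof -
    have "continuous_on {0..a} (\<lambda>x. - integral {x..a} (Kt x))" using PCV2[OF cKt _ order_refl] a by (intro continuous_intros) auto
    then show ?thesis using YKt continuous_on_cong[of "{0..a}" "{0..a}" Y "\<lambda>x. - integral {x..a} (Kt x)"] by simp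
  qed
  have cKts: "continuous_on {s..a} (Kt s)" if "s \<in> {0..a}" for s
    using slice1[OF cKt that] that by (auto intro: continuous_on_subset)
  have BY: "B (phi s w) (Y s) = - integral {s..a} (GB s)" if "s \<in> {0..a}" for s
    unfolding YKt[OF that] GB_def blinfun.minus_right using blin_int[OF cKts[OF that]] by simp
  have LY: "L (phi s w) (Y s) = - integral {s..a} (GL s)" if "s \<in> {0..a}" for s
    unfolding YKt[OF that] GL_def blinfun.minus_right using blin_int[OF cKts[OF that]] by simp
  show ?thesis
    unfolding Y_def[symmetric] mild_sol_def
  proof (intro conjI ballI)
    show "continuous_on {0..a} Y" by fact
    fix t assume t: "t \<in> {0..a}"
    have sub: "{0..t} \<subseteq> {0..a}" "{t..a} \<subseteq> {0..a}" using t by auto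
    define I1 where "I1 r = integral {0..r} (\<lambda>s. GB s r)" for r
    define I2 where "I2 r = integral {0..t} (\<lambda>s. GB s r)" for r
    define J1 where "J1 r = integral {0..r} (\<lambda>s. GL s r)" for r
    define J2 where "J2 r = integral {0..t} (\<lambda>s. GL s r)" for r
    have e1: "integral {0..t} (\<lambda>s. B (phi s w) (Y s)) = - (integral {0..t} I1 + integral {t..a} I2)"
    proof -
      have "integral {0..t} (\<lambda>s. B (phi s w) (Y s)) = integral {0..t} (\<lambda>s. - integral {s..a} (GB s))"
        using BY sub by (intro integral_cong) auto
      also have "\<dots> = - (integral {0..t} I1 + integral {t..a} I2)"
        unfolding I1_def I2_def integral_neg using SPL[OF cGB] t by auto
      finally show ?thesis .
    qed
    have e2: "integral {0..t} (\<lambda>s. L (phi s w) (Y s)) = - (integral {0..t} J1 + integral {t..a} J2)"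
    proof -
      have "integral {0..t} (\<lambda>s. L (phi s w) (Y s)) = integral {0..t} (\<lambda>s. - integral {s..a} (GL s))"
        using LY sub by (intro integral_cong) auto
      also have "\<dots> = - (integral {0..t} J1 + integral {t..a} J2)"
        unfolding J1_def J2_def integral_neg using SPL[OF cGL] t by auto
      finally show ?thesis .
    qed
    have IJ1: "I1 r \<in> D \<and> A (I1 r) = h r - Kt 0 r - J1 r" if r: "r \<in> {0..t}" for r
    proof -
      have ra: "r \<in> {0..a}" and rr: "r \<in> {0..r}" using r t by auto
      have i1: "I1 r = integral {0..r} (\<lambda>s. B (phi s w) (K s r))"
        unfolding I1_def GB_def Kt_def by (rule integral_cong) auto
      have j1: "J1 r = integral {0..r} (\<lambda>s. L (phi s w) (K s r) + 0)"
        unfolding J1_def GL_def Kt_def by (rule integral_cong) auto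
      from mK[OF ra] rr have mt: "integral {0..r} (\<lambda>s. B (phi s w) (K s r)) \<in> D"
        "K r r = K 0 r + A (integral {0..r} (\<lambda>s. B (phi s w) (K s r))) + integral {0..r} (\<lambda>s. L (phi s w) (K s r) + 0)"
        unfolding mild_sol_def by blast+
      have "min 0 r = 0" using r by simp
      then have "Kt 0 r = K 0 r" unfolding Kt_def by simp
      then show ?thesis using mt i1 j1 Kd[OF ra] by (simp add: algebra_simps)
    qed
    have IJ2: "I2 r \<in> D \<and> A (I2 r) = Kt t r - Kt 0 r - J2 r" if r: "r \<in> {t..a}" for r
    proof -
      have ra: "r \<in> {0..a}" and tr: "t \<in> {0..r}" using r t by auto
      have i1: "I2 r = integral {0..t} (\<lambda>s. B (phi s w) (K s r))"
        unfolding I2_def GB_def Kt_def by (rule integral_cong) (use r in auto)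
      have j1: "J2 r = integral {0..t} (\<lambda>s. L (phi s w) (K s r) + 0)"
        unfolding J2_def GL_def Kt_def by (rule integral_cong) (use r in auto)
      from mK[OF ra] tr have mt: "integral {0..t} (\<lambda>s. B (phi s w) (K s r)) \<in> D"
        "K t r = K 0 r + A (integral {0..t} (\<lambda>s. B (phi s w) (K s r))) + integral {0..t} (\<lambda>s. L (phi s w) (K s r) + 0)"
        unfolding mild_sol_def by blast+
      have "min 0 r = 0" "min t r = t" using r t by auto
      then have "Kt 0 r = K 0 r" "Kt t r = K t r" unfolding Kt_def by simp_all
      then show ?thesis using mt i1 j1 by (simp add: algebra_simps)
    qed
    have t0: "0 \<le> t" "t \<le> a" using t by auto
    have cI1: "continuous_on {0..t} I1" unfolding I1_def using PCV[OF cGBs] sub(1) by (auto intro: continuous_on_subset)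
    have cJ1: "continuous_on {0..t} J1" unfolding J1_def using PCV[OF cGLs] sub(1) by (auto intro: continuous_on_subset)
    have cI2: "continuous_on {t..a} I2"
    proof -
      have "continuous_on ({t..a} \<times> cbox 0 t) (\<lambda>(r,s). GB s r)" using cont_sub[OF cGBs sub(2) sub(1)] by simp
      then show ?thesis unfolding I2_def using integral_continuous_on_param by fastforce
    qed
    have cJ2: "continuous_on {t..a} J2"
    proof -
      have "continuous_on ({t..a} \<times> cbox 0 t) (\<lambda>(r,s). GL s r)" using cont_sub[OF cGLs sub(2) sub(1)] by simp
      then show ?thesis unfolding J2_def using integral_continuous_on_param by fastforce
    qed
    have cK0: "continuous_on {0..a} (Kt 0)" using slice1[OF cKt, of 0] a by auto
    have cKtt: "continuous_on {0..a} (Kt t)" using slice1[OF cKt t] .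
    have cK01: "continuous_on {0..t} (Kt 0)" using continuous_on_subset[OF cK0 sub(1)] .
    have cK02: "continuous_on {t..a} (Kt 0)" using continuous_on_subset[OF cK0 sub(2)] .
    have cKt2: "continuous_on {t..a} (Kt t)" using continuous_on_subset[OF cKtt sub(2)] .
    have cht: "continuous_on {0..t} h" using continuous_on_subset[OF ch sub(1)] .
    have cAI1: "continuous_on {0..t} (\<lambda>r. A (I1 r))"
    proof -
      have "continuous_on {0..t} (\<lambda>r. h r - Kt 0 r - J1 r)" using cht cK01 cJ1 by (intro continuous_intros)
      then show ?thesis using IJ1 continuous_on_cong[of "{0..t}" "{0..t}" "\<lambda>r. A (I1 r)" "\<lambda>r. h r - Kt 0 r - J1 r"] by simp
    qed
    have cAI2: "continuous_on {t..a} (\<lambda>r. A (I2 r))"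
    proof -
      have "continuous_on {t..a} (\<lambda>r. Kt t r - Kt 0 r - J2 r)" using cKt2 cK02 cJ2 by (intro continuous_intros)
      then show ?thesis using IJ2 continuous_on_cong[of "{t..a}" "{t..a}" "\<lambda>r. A (I2 r)" "\<lambda>r. Kt t r - Kt 0 r - J2 r"] by simp
    qed
    have CL1: "integral {0..t} I1 \<in> D \<and> A (integral {0..t} I1) = integral {0..t} (\<lambda>r. A (I1 r))"
      by (rule CL[OF clo cI1 cAI1]) (use IJ1 in blast)
    have CL2: "integral {t..a} I2 \<in> D \<and> A (integral {t..a} I2) = integral {t..a} (\<lambda>r. A (I2 r))"
      by (rule CL[OF clo cI2 cAI2]) (use IJ2 in blast)
    have A1: "A (integral {0..t} I1) = integral {0..t} h - integral {0..t} (Kt 0) - integral {0..t} J1"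
    proof -
      have "integral {0..t} (\<lambda>r. A (I1 r)) = integral {0..t} (\<lambda>r. h r - Kt 0 r - J1 r)"
        using IJ1 by (intro integral_cong) auto
      also have "\<dots> = integral {0..t} h - integral {0..t} (Kt 0) - integral {0..t} J1"
        using cht cK01 cJ1 by (simp add: integral_diff cont_int continuous_intros)
      finally show ?thesis using CL1 by simp
    qed
    have A2: "A (integral {t..a} I2) = integral {t..a} (Kt t) - integral {t..a} (Kt 0) - integral {t..a} J2"
    proof -
      have "integral {t..a} (\<lambda>r. A (I2 r)) = integral {t..a} (\<lambda>r. Kt t r - Kt 0 r - J2 r)"
        using IJ2 by (intro integral_cong) auto
      also have "\<dots> = integral {t..a} (Kt t) - integral {t..a} (Kt 0) - integral {t..a} J2"
        using cKt2 cK02 cJ2 by (simp add: integral_diff cont_int continuous_intros)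
      finally show ?thesis using CL2 by simp
    qed
    have inD: "integral {0..t} (\<lambda>s. B (phi s w) (Y s)) \<in> D"
      unfolding e1 using CL1 CL2 closed_op_facts(5,6)[OF clo] by blast
    have AY: "A (integral {0..t} (\<lambda>s. B (phi s w) (Y s))) = - (A (integral {0..t} I1) + A (integral {t..a} I2))"
      unfolding e1 using CL1 CL2 closed_op_facts(2,3,6)[OF clo] by metis
    have cLY: "continuous_on {0..t} (\<lambda>s. L (phi s w) (Y s))"
      using cL1[OF continuous_on_subset[OF cY sub(1)]] by simp
    have e3: "integral {0..t} (\<lambda>s. L (phi s w) (Y s) + h s) = - (integral {0..t} J1 + integral {t..a} J2) + integral {0..t} h"
      using e2 cLY cht by (simp add: integral_add cont_int)
    have Y0: "Y 0 = - (integral {0..t} (Kt 0) + integral {t..a} (Kt 0))"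
      using YKt[of 0] a Henstock_Kurzweil_Integration.integral_combine[where a=0 and c=t and b=a and f="Kt 0"] t cont_int[OF cK0] by auto
    have Yt: "Y t = - integral {t..a} (Kt t)" using YKt[OF t] .
    show "integral {0..t} (\<lambda>s. B (phi s w) (Y s)) \<in> D" by fact
    show "Y t = Y 0 + A (integral {0..t} (\<lambda>s. B (phi s w) (Y s))) + integral {0..t} (\<lambda>s. L (phi s w) (Y s) + h s)"
      unfolding AY A1 A2 e3 Y0 Yt by (simp add: algebra_simps)
  qed
qed


lemma cont_phi_r:
  assumes "\<And>x. x \<in> S \<Longrightarrow> p x \<ge> 0" "continuous_on S p"
  shows "continuous_on S (\<lambda>x. phi (p x) w)"
proof -
  have c0: "continuous_on S (\<lambda>x. (p x, w))" using assms(2) by (intro continuous_intros)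
  have im: "(\<lambda>x. (p x, w)) ` S \<subseteq> {0..} \<times> UNIV" using assms(1) by auto
  have "continuous_on S ((\<lambda>(t,w). phi t w) \<circ> (\<lambda>x. (p x, w)))"
    by (rule continuous_on_compose[OF c0 continuous_on_subset[OF semiflow_cont[OF sf] im]])
  then show ?thesis by (simp add: o_def)
qed

lemma part1:
  assumes T0: "C0_linear_cocycle phi D A B L T0" and gc: "continuous_on UNIV g"
    and a: "0 \<le> a" and z: "mild_sol phi D A B L g w 0 a z" and t: "t \<in> {0..a}"
  shows "z t = T0 t w (z 0) + integral {0..t} (\<lambda>s. T0 (t - s) (phi s w) (g s))"
proof -
  have T0d: "(\<forall>w. T0 0 w = id_blinfun) \<and>
     (\<forall>t s w. t \<ge> 0 \<longrightarrow> s \<ge> 0 \<longrightarrow> T0 (t + s) w = T0 t (phi s w) o\<^sub>L T0 s w) \<and>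
     continuous_on ({0..} \<times> UNIV \<times> UNIV) (\<lambda>(t, w, x). blinfun_apply (T0 t w) x) \<and>
     (\<forall>w x b. b \<ge> 0 \<longrightarrow>
        mild_sol phi D A B L (\<lambda>_. 0) w 0 b (\<lambda>t. T0 t w x) \<and>
        (\<forall>u. mild_sol phi D A B L (\<lambda>_. 0) w 0 b u \<and> u 0 = x \<longrightarrow>
             (\<forall>t\<in>{0..b}. u t = T0 t w x)))"
    using T0 unfolding C0_linear_cocycle_def .
  have T00: "\<And>v. T0 0 v = id_blinfun" using T0d[THEN conjunct1] by blast
  have cT: "continuous_on ({0..} \<times> UNIV \<times> UNIV) (\<lambda>(t, w, x). blinfun_apply (T0 t w) x)"
    using T0d[THEN conjunct2, THEN conjunct2, THEN conjunct1] .
  note h4 = T0d[THEN conjunct2, THEN conjunct2, THEN conjunct2]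
  have sol: "\<And>v x b. b \<ge> 0 \<Longrightarrow> mild_sol phi D A B L (\<lambda>_. 0) v 0 b (\<lambda>t. T0 t v x)"
    using h4 by blast
  have uniq: "\<And>v x b u. b \<ge> 0 \<Longrightarrow> mild_sol phi D A B L (\<lambda>_. 0) v 0 b u \<Longrightarrow> u 0 = x \<Longrightarrow> (\<forall>t\<in>{0..b}. u t = T0 t v x)"
    using h4 by blast
  define K where "K s r = T0 (s - r) (phi r w) (g r)" for s r
  let ?Tr = "{(s,r). 0 \<le> r \<and> r \<le> s \<and> s \<le> a}"
  have cK: "continuous_on ?Tr (\<lambda>(s,r). K s r)"
  proof -
    have c1: "continuous_on ?Tr (\<lambda>x. phi (snd x) w)"
      by (rule cont_phi_r) (auto intro!: continuous_intros)
    have c2: "continuous_on ?Tr (\<lambda>x. g (snd x))"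
      by (rule continuous_on_compose2[OF gc]) (auto intro!: continuous_intros)
    have c3: "continuous_on ?Tr (\<lambda>x. (fst x - snd x, phi (snd x) w, g (snd x)))"
      using c1 c2 by (intro continuous_intros)
    have "continuous_on ?Tr ((\<lambda>(t, w, x). blinfun_apply (T0 t w) x) \<circ> (\<lambda>x. (fst x - snd x, phi (snd x) w, g (snd x))))"
      by (rule continuous_on_compose[OF c3 continuous_on_subset[OF cT]]) auto
    then show ?thesis by (simp add: K_def o_def case_prod_unfold)
  qed
  have cg: "continuous_on S g" for S using continuous_on_subset[OF gc] by blast
  have mK: "mild_sol phi D A B L (\<lambda>_. 0) w r a (\<lambda>s. K s r)" if r: "r \<in> {0..a}" for r
  proof -
    have "mild_sol phi D A B L (\<lambda>_. 0) (phi r w) 0 (a - r) (\<lambda>t. T0 t (phi r w) (g r))"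
      using sol r by auto
    from mild_shift[OF _ this] r show ?thesis by (simp add: K_def)
  qed
  have Kd: "K r r = g r" for r by (simp add: K_def T00)
  have F: "mild_sol phi D A B L g w 0 a (\<lambda>t. integral {0..t} (K t))"
    by (rule FD[OF a cK cg mK Kd])
  have gg: "(\<lambda>s. g s + - g s) = (\<lambda>_. 0)" by auto
  have v: "mild_sol phi D A B L (\<lambda>_. 0) w 0 a (\<lambda>s. z s + - integral {0..s} (K s))"
  proof -
    have "continuous_on {0..a} (\<lambda>s. - g s)" using cg[of "{0..a}"] by (intro continuous_intros)
    from mild_add[OF order_refl cg this z mild_neg[OF F]] show ?thesis unfolding gg .
  qed
  have "z t + - integral {0..t} (K t) = T0 t w (z 0)"
    using uniq[OF a v, of "z 0"] t by simp
  moreover have "K t = (\<lambda>s. T0 (t - s) (phi s w) (g s))" by (simp add: K_def fun_eq_iff)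
  ultimately show ?thesis by (simp add: algebra_simps)
qed


lemma part2:
  assumes C: "C0_cocycle_correspondence phi D A B L P T1 Sb" and gc: "continuous_on UNIV g"
    and a: "0 \<le> a" and z: "mild_sol phi D A B L g w 0 a z" and t: "t \<in> {0..a}"
  shows "P (phi t w) (z t) = T1 t w (P w (z 0)) + integral {0..t} (\<lambda>s. T1 (t - s) (phi s w) (P (phi s w) (g s)))
       \<and> z t - P (phi t w) (z t) = Sb (a - t) (phi t w) (z a - P (phi a w) (z a))
             - integral {t..a} (\<lambda>s. Sb (s - t) (phi t w) (g s - P (phi s w) (g s)))"
proof -
  note Cd = C[unfolded C0_cocycle_correspondence_def Let_def]
  note f1 = Cd[THEN conjunct1]
  note f2 = Cd[THEN conjunct2, THEN conjunct1]
  note f3 = Cd[THEN conjunct2, THEN conjunct2, THEN conjunct1]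
  note f4 = Cd[THEN conjunct2, THEN conjunct2, THEN conjunct2, THEN conjunct1]
  note f6 = Cd[THEN conjunct2, THEN conjunct2, THEN conjunct2, THEN conjunct2, THEN conjunct2, THEN conjunct1]
  note f7 = Cd[THEN conjunct2, THEN conjunct2, THEN conjunct2, THEN conjunct2, THEN conjunct2, THEN conjunct2, THEN conjunct1]
  note f8 = Cd[THEN conjunct2, THEN conjunct2, THEN conjunct2, THEN conjunct2, THEN conjunct2, THEN conjunct2, THEN conjunct2, THEN conjunct1]
  note f10 = Cd[THEN conjunct2, THEN conjunct2, THEN conjunct2, THEN conjunct2, THEN conjunct2, THEN conjunct2, THEN conjunct2, THEN conjunct2, THEN conjunct2, THEN conjunct1]
  note f11 = Cd[THEN conjunct2, THEN conjunct2, THEN conjunct2, THEN conjunct2, THEN conjunct2, THEN conjunct2, THEN conjunct2, THEN conjunct2, THEN conjunct2, THEN conjunct2]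
  have PP: "P v (P v x) = P v x" for v x
  proof -
    have "P v o\<^sub>L P v = P v" using f1 by blast
    then have "(P v o\<^sub>L P v) x = P v x" by simp
    then show ?thesis by simp
  qed
  have P0: "P v (y - P v y) = 0" for v y by (simp add: blinfun.diff_right PP)
  have Xmem: "P v x \<in> range (blinfun_apply (P v))" for v x by simp
  have Ymem: "y - P v y \<in> range (\<lambda>z. z - P v z)" for v y by simp
  have X0: "0 \<in> range (blinfun_apply (P v))" for v using Xmem[of v 0] by simp
  have Y0: "0 \<in> range (\<lambda>z. z - P v z)" for v using Ymem[of 0 v] by simp
  have inX: "P v x = x" if "x \<in> range (blinfun_apply (P v))" for v x using that PP by auto
  have inY: "P v y = 0" if "y \<in> range (\<lambda>z. z - P v z)" for v y using that P0 by auto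
  have Tmap: "T1 s v x \<in> range (blinfun_apply (P (phi s v)))" if "s \<ge> 0" "x \<in> range (blinfun_apply (P v))" for s v x
    using f3 that by blast
  have Tz: "T1 s v 0 = 0" if "s \<ge> 0" for s v
  proof -
    have "T1 s v (0 *\<^sub>R 0 + 0 *\<^sub>R 0) = 0 *\<^sub>R T1 s v 0 + 0 *\<^sub>R T1 s v 0"
      using f3 that X0[of v] by blast
    then show ?thesis by simp
  qed
  have T10: "T1 0 v x = x" if "x \<in> range (blinfun_apply (P v))" for v x using f4 that by blast
  have Smap: "Sb s v y \<in> range (\<lambda>z. z - P v z)" if "s \<ge> 0" "y \<in> range (\<lambda>z. z - P (phi s v) z)" for s v y
    using f7 that by blast
  have Sz: "Sb s v 0 = 0" if "s \<ge> 0" for s v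
  proof -
    have "Sb s v (0 *\<^sub>R 0 + 0 *\<^sub>R 0) = 0 *\<^sub>R Sb s v 0 + 0 *\<^sub>R Sb s v 0"
      using f7 that Y0[of "phi s v"] by blast
    then show ?thesis by simp
  qed
  have S0: "Sb 0 v y = y" if "y \<in> range (\<lambda>z. z - P v z)" for v y using f8 that by blast
  have bvp: "mild_sol phi D A B L (\<lambda>_. 0) w t1 t2 (\<lambda>t. T1 (t - t1) (phi t1 w) x1 + Sb (t2 - t) (phi t w) y2)"
    "\<And>u. mild_sol phi D A B L (\<lambda>_. 0) w t1 t2 u \<Longrightarrow> P (phi t1 w) (u t1) = x1 \<Longrightarrow> u t2 - P (phi t2 w) (u t2) = y2 \<Longrightarrow>
        (\<forall>t\<in>{t1..t2}. u t = T1 (t - t1) (phi t1 w) x1 + Sb (t2 - t) (phi t w) y2)"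
    if "0 \<le> t1" "t1 \<le> t2" "x1 \<in> range (blinfun_apply (P (phi t1 w)))" "y2 \<in> range (\<lambda>z. z - P (phi t2 w) z)" for t1 t2 x1 y2
  proof -
    have "mild_sol phi D A B L (\<lambda>_. 0) w t1 t2 (\<lambda>t. T1 (t - t1) (phi t1 w) x1 + Sb (t2 - t) (phi t w) y2) \<and>
          P (phi t1 w) (T1 (t1 - t1) (phi t1 w) x1 + Sb (t2 - t1) (phi t1 w) y2) = x1 \<and>
          (T1 (t2 - t1) (phi t1 w) x1 + Sb (t2 - t2) (phi t2 w) y2) - P (phi t2 w) (T1 (t2 - t1) (phi t1 w) x1 + Sb (t2 - t2) (phi t2 w) y2) = y2 \<and>
          (\<forall>u. mild_sol phi D A B L (\<lambda>_. 0) w t1 t2 u \<and> P (phi t1 w) (u t1) = x1 \<and> u t2 - P (phi t2 w) (u t2) = y2 \<longrightarrow>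
               (\<forall>t\<in>{t1..t2}. u t = T1 (t - t1) (phi t1 w) x1 + Sb (t2 - t) (phi t w) y2))"
      using f11 that by blast
    then show "mild_sol phi D A B L (\<lambda>_. 0) w t1 t2 (\<lambda>t. T1 (t - t1) (phi t1 w) x1 + Sb (t2 - t) (phi t w) y2)"
      "\<And>u. mild_sol phi D A B L (\<lambda>_. 0) w t1 t2 u \<Longrightarrow> P (phi t1 w) (u t1) = x1 \<Longrightarrow> u t2 - P (phi t2 w) (u t2) = y2 \<Longrightarrow>
        (\<forall>t\<in>{t1..t2}. u t = T1 (t - t1) (phi t1 w) x1 + Sb (t2 - t) (phi t w) y2)"
      by blast+
  qed
  have cg: "continuous_on S g" for S using continuous_on_subset[OF gc] by blast
  have cPg: "continuous_on S (\<lambda>x. P (phi (p x) w) (g (q x)))" if "continuous_on S p" "continuous_on S q" "\<And>x. x \<in> S \<Longrightarrow> p x \<ge> 0" for S p q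
  proof -
    have c1: "continuous_on S (\<lambda>x. (phi (p x) w, g (q x)))"
      using cont_phi_r[OF that(3,1)] continuous_on_compose2[OF gc that(2)] by (intro continuous_intros) auto
    have "continuous_on S ((\<lambda>(w, z). blinfun_apply (P w) z) \<circ> (\<lambda>x. (phi (p x) w, g (q x))))"
      by (rule continuous_on_compose[OF c1 continuous_on_subset[OF f2]]) simp
    then show ?thesis by (simp add: o_def)
  qed
  define XK where "XK s r = T1 (s - r) (phi r w) (P (phi r w) (g r))" for s r
  define YK where "YK s r = Sb (r - s) (phi s w) (g r - P (phi r w) (g r))" for s r
  define hX where "hX s = P (phi s w) (g s)" for s
  define hY where "hY s = g s - P (phi s w) (g s)" for s
  let ?Tr = "{(s,r). 0 \<le> r \<and> r \<le> s \<and> s \<le> a}"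
  let ?Tr2 = "{(s,r). 0 \<le> s \<and> s \<le> r \<and> r \<le> a}"
  have chX: "continuous_on {0..a} hX"
  proof -
    have "continuous_on {0..a} (\<lambda>x. P (phi x w) (g x))"
      by (rule cPg[of "{0..a}" "\<lambda>x. x" "\<lambda>x. x"]) (auto intro: continuous_on_id)
    then show ?thesis unfolding hX_def .
  qed
  have chY: "continuous_on {0..a} hY"
  proof -
    have "continuous_on {0..a} (\<lambda>x. g x - hX x)" using chX cg[of "{0..a}"] by (intro continuous_on_diff)
    then show ?thesis unfolding hY_def hX_def .
  qed
  have cXK: "continuous_on ?Tr (\<lambda>(s,r). XK s r)"
  proof -
    have c1: "continuous_on ?Tr (\<lambda>x. phi (snd x) w)"
      by (rule cont_phi_r) (auto intro!: continuous_intros)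
    have c2: "continuous_on ?Tr (\<lambda>x. P (phi (snd x) w) (g (snd x)))"
      by (rule cPg[of ?Tr snd snd]) (auto intro: continuous_on_snd[OF continuous_on_id, simplified])
    have c3: "continuous_on ?Tr (\<lambda>x. (fst x - snd x, phi (snd x) w, P (phi (snd x) w) (g (snd x))))"
      by (intro continuous_on_Pair c1 c2 continuous_on_diff) (auto intro: continuous_on_fst[OF continuous_on_id, simplified] continuous_on_snd[OF continuous_on_id, simplified])
    have "continuous_on ?Tr ((\<lambda>(t, w, x). T1 t w x) \<circ> (\<lambda>x. (fst x - snd x, phi (snd x) w, P (phi (snd x) w) (g (snd x)))))"
      by (rule continuous_on_compose[OF c3 continuous_on_subset[OF f6]]) auto
    then show ?thesis by (simp add: XK_def o_def case_prod_unfold)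
  qed
  have cYK: "continuous_on ?Tr2 (\<lambda>(s,r). YK s r)"
  proof -
    have c1: "continuous_on ?Tr2 (\<lambda>x. phi (fst x) w)"
      by (rule cont_phi_r) (auto intro!: continuous_intros)
    have c2: "continuous_on ?Tr2 (\<lambda>x. P (phi (snd x) w) (g (snd x)))"
      by (rule cPg[of ?Tr2 snd snd]) (auto intro: continuous_on_snd[OF continuous_on_id, simplified])
    have c2': "continuous_on ?Tr2 (\<lambda>x. g (snd x))"
      by (rule continuous_on_compose2[OF gc]) (auto intro!: continuous_intros)
    have c3: "continuous_on ?Tr2 (\<lambda>x. (snd x - fst x, phi (fst x) w, g (snd x) - P (phi (snd x) w) (g (snd x))))"
      by (intro continuous_on_Pair c1 c2 c2' continuous_on_diff) (auto intro: continuous_on_fst[OF continuous_on_id, simplified] continuous_on_snd[OF continuous_on_id, simplified])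
    have im: "(\<lambda>x. (snd x - fst x, phi (fst x) w, g (snd x) - P (phi (snd x) w) (g (snd x)))) ` ?Tr2
        \<subseteq> {(t, w, y). t \<ge> 0 \<and> y \<in> range (\<lambda>z. z - P (phi t w) z)}"
    proof
      fix x assume "x \<in> (\<lambda>x. (snd x - fst x, phi (fst x) w, g (snd x) - P (phi (snd x) w) (g (snd x)))) ` ?Tr2"
      then obtain s r where x: "x = (r - s, phi s w, g r - P (phi r w) (g r))" and sr: "0 \<le> s" "s \<le> r" "r \<le> a"
        by auto
      have "phi (r - s) (phi s w) = phi r w" using sf_add[of "r - s" s w] sr by simp
      then have "g r - P (phi r w) (g r) \<in> range (\<lambda>z. z - P (phi (r - s) (phi s w)) z)"
        using Ymem[of "g r" "phi r w"] by simp
      then show "x \<in> {(t, w, y). t \<ge> 0 \<and> y \<in> range (\<lambda>z. z - P (phi t w) z)}"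
        using x sr by simp
    qed
    have "continuous_on ?Tr2 ((\<lambda>(t, w, y). Sb t w y) \<circ> (\<lambda>x. (snd x - fst x, phi (fst x) w, g (snd x) - P (phi (snd x) w) (g (snd x)))))"
      by (rule continuous_on_compose[OF c3 continuous_on_subset[OF f10 im]])
    then show ?thesis by (simp add: YK_def o_def case_prod_unfold)
  qed
  have mXK: "mild_sol phi D A B L (\<lambda>_. 0) w r a (\<lambda>s. XK s r)" if r: "r \<in> {0..a}" for r
  proof -
    have "mild_sol phi D A B L (\<lambda>_. 0) w r a (\<lambda>s. T1 (s - r) (phi r w) (P (phi r w) (g r)) + Sb (a - s) (phi s w) 0)"
      using bvp(1)[of r a "P (phi r w) (g r)" 0] r Xmem Y0 by auto
    then show ?thesis by (rule mild_cong) (simp add: XK_def Sz)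
  qed
  have XKd: "XK r r = hX r" if "r \<in> {0..a}" for r unfolding XK_def hX_def using T10 Xmem by simp
  have mYK: "mild_sol phi D A B L (\<lambda>_. 0) w 0 r (\<lambda>s. YK s r)" if r: "r \<in> {0..a}" for r
  proof -
    have "mild_sol phi D A B L (\<lambda>_. 0) w 0 r (\<lambda>s. T1 (s - 0) (phi 0 w) 0 + Sb (r - s) (phi s w) (g r - P (phi r w) (g r)))"
      using bvp(1)[of 0 r 0 "g r - P (phi r w) (g r)"] r X0 Ymem by auto
    then show ?thesis by (rule mild_cong) (simp add: YK_def Tz)
  qed
  have YKd: "YK r r = hY r" if "r \<in> {0..a}" for r unfolding YK_def hY_def using S0 Ymem by simp
  define Xs where "Xs t = integral {0..t} (XK t)" for t
  define Ys where "Ys t = - integral {t..a} (YK t)" for t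
  have mX: "mild_sol phi D A B L hX w 0 a Xs" unfolding Xs_def by (rule FD[OF a cXK chX mXK XKd])
  have mY: "mild_sol phi D A B L hY w 0 a Ys" unfolding Ys_def by (rule BD[OF a cYK chY mYK YKd])
  have hXY: "(\<lambda>s. hX s + hY s) = g" by (simp add: hX_def hY_def fun_eq_iff)
  have mXY: "mild_sol phi D A B L g w 0 a (\<lambda>s. Xs s + Ys s)"
    using mild_add[OF order_refl chX chY mX mY] unfolding hXY .
  have gg: "(\<lambda>s. g s + - g s) = (\<lambda>_. 0)" by auto
  define u where "u s = z s + - (Xs s + Ys s)" for s
  have mu: "mild_sol phi D A B L (\<lambda>_. 0) w 0 a u"
  proof -
    have "continuous_on {0..a} (\<lambda>s. - g s)" using cg[of "{0..a}"] by (intro continuous_intros)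
    from mild_add[OF order_refl cg this z mild_neg[OF mXY]] show ?thesis unfolding gg u_def[abs_def] .
  qed
  have PX: "P (phi s w) (Xs s) = Xs s" if s: "s \<in> {0..a}" for s
  proof -
    have c: "continuous_on {0..s} (XK s)"
      by (rule tri_slice[OF cXK]) (use s in auto)
    have "P (phi s w) (Xs s) = integral {0..s} (\<lambda>r. P (phi s w) (XK s r))"
      unfolding Xs_def by (rule blin_int[OF c])
    also have "\<dots> = Xs s" unfolding Xs_def
    proof (rule integral_cong)
      fix r assume r: "r \<in> {0..s}"
      have "phi (s - r) (phi r w) = phi s w" using sf_add[of "s - r" r w] r by simp
      then have "XK s r \<in> range (blinfun_apply (P (phi s w)))"
        unfolding XK_def using Tmap[of "s - r" "P (phi r w) (g r)" "phi r w"] r Xmem by simp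
      then show "P (phi s w) (XK s r) = XK s r" by (rule inX)
    qed
    finally show ?thesis .
  qed
  have PY: "P (phi s w) (Ys s) = 0" if s: "s \<in> {0..a}" for s
  proof -
    have c: "continuous_on {s..a} (YK s)"
      by (rule tri_slice[OF cYK]) (use s in auto)
    have "P (phi s w) (Ys s) = - integral {s..a} (\<lambda>r. P (phi s w) (YK s r))"
      unfolding Ys_def blinfun.minus_right by (simp add: blin_int[OF c])
    also have "\<dots> = - integral {s..a} (\<lambda>r. 0)"
    proof (intro arg_cong[where f=uminus] integral_cong)
      fix r assume r: "r \<in> {s..a}"
      have "phi (r - s) (phi s w) = phi r w" using sf_add[of "r - s" s w] r s by simp
      then have "YK s r \<in> range (\<lambda>z. z - P (phi s w) z)"
        unfolding YK_def using Smap[of "r - s" "g r - P (phi r w) (g r)" "phi s w"] r Ymem by simp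
      then show "P (phi s w) (YK s r) = 0" by (rule inY)
    qed
    finally show ?thesis by simp
  qed
  have X0v: "Xs 0 = 0" by (simp add: Xs_def)
  have Yav: "Ys a = 0" by (simp add: Ys_def)
  have a0: "0 \<in> {0..a}" "a \<in> {0..a}" using a by auto
  define x1 where "x1 = P (phi 0 w) (u 0)"
  define y2 where "y2 = u a - P (phi a w) (u a)"
  have U: "\<forall>s\<in>{0..a}. u s = T1 (s - 0) (phi 0 w) x1 + Sb (a - s) (phi s w) y2"
    by (rule bvp(2)[OF order_refl a _ _ mu]) (auto simp: x1_def y2_def)
  have x1v: "x1 = P w (z 0)"
    unfolding x1_def u_def sf0 using PY[OF a0(1)] sf0 X0v by (simp add: blinfun.add_right blinfun.minus_right blinfun.diff_right)
  have y2v: "y2 = z a - P (phi a w) (z a)"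
    unfolding y2_def u_def using PX[OF a0(2)] Yav by (simp add: blinfun.add_right blinfun.minus_right blinfun.diff_right)
  have ut: "u t = T1 t w x1 + Sb (a - t) (phi t w) y2" using U t sf0 by simp
  have TX: "T1 t w x1 \<in> range (blinfun_apply (P (phi t w)))" unfolding x1v using Tmap t Xmem by auto
  have SY: "Sb (a - t) (phi t w) y2 \<in> range (\<lambda>z. z - P (phi t w) z)"
  proof -
    have "phi (a - t) (phi t w) = phi a w" using sf_add[of "a - t" t w] t by simp
    then show ?thesis unfolding y2v using Smap[of "a - t" "z a - P (phi a w) (z a)" "phi t w"] t Ymem by simp
  qed
  have Put: "P (phi t w) (u t) = T1 t w x1" unfolding ut blinfun.add_right using inX[OF TX] inY[OF SY] by simp
  have Put2: "P (phi t w) (u t) = P (phi t w) (z t) - Xs t"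
    unfolding u_def using PX[OF t] PY[OF t] by (simp add: blinfun.add_right blinfun.minus_right blinfun.diff_right)
  have zt: "z t = u t + Xs t + Ys t" unfolding u_def by simp
  have r1: "P (phi t w) (z t) = T1 t w (P w (z 0)) + Xs t" using Put Put2 x1v by (simp add: algebra_simps)
  have r2: "z t - P (phi t w) (z t) = Sb (a - t) (phi t w) (z a - P (phi a w) (z a)) + Ys t"
    using zt r1 ut x1v y2v by simp
  have XsE: "Xs t = integral {0..t} (\<lambda>s. T1 (t - s) (phi s w) (P (phi s w) (g s)))"
    unfolding Xs_def XK_def ..
  have YsE: "Ys t = - integral {t..a} (\<lambda>s. Sb (s - t) (phi t w) (g s - P (phi s w) (g s)))"
    unfolding Ys_def YK_def ..
  show ?thesis using r1 r2 XsE YsE by simp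
qed

end


theorem lemma3p27:
  fixes phi :: "real \<Rightarrow> 'm::t2_space \<Rightarrow> 'm"
    and D :: "'z::banach set" and A :: "'z \<Rightarrow> 'z"
    and B L :: "'m \<Rightarrow> ('z \<Rightarrow>\<^sub>L 'z)"
    and g :: "real \<Rightarrow> 'z"
  assumes "semiflow phi"
    and "closed_linear_operator D A"
    and "admissible_coeff phi B"
    and "admissible_coeff phi L"
    and "continuous_on UNIV g"
  shows "(\<forall>T0. C0_linear_cocycle phi D A B L T0 \<longrightarrow>
            (\<forall>w a z. a \<ge> 0 \<longrightarrow> mild_sol phi D A B L g w 0 a z \<longrightarrow>
               (\<forall>t\<in>{0..a}. z t = T0 t w (z 0)
                   + integral {0..t} (\<lambda>s. T0 (t - s) (phi s w) (g s)))))
       \<and> (\<forall>P T1 Sb. C0_cocycle_correspondence phi D A B L P T1 Sb \<longrightarrow>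
            (\<forall>w a z. a \<ge> 0 \<longrightarrow> mild_sol phi D A B L g w 0 a z \<longrightarrow>
               (\<forall>t\<in>{0..a}.
                  P (phi t w) (z t) = T1 t w (P w (z 0))
                     + integral {0..t} (\<lambda>s. T1 (t - s) (phi s w) (P (phi s w) (g s)))
                \<and> z t - P (phi t w) (z t) =
                     Sb (a - t) (phi t w) (z a - P (phi a w) (z a))
                     - integral {t..a} (\<lambda>s. Sb (s - t) (phi t w) (g s - P (phi s w) (g s))))))"
proof -
  have Bc: "continuous_on UNIV (\<lambda>(w, z). blinfun_apply (B w) z)"
    using assms(3) unfolding admissible_coeff_def by blast
  have Lc: "continuous_on UNIV (\<lambda>(w, z). blinfun_apply (L w) z)"
    using assms(4) unfolding admissible_coeff_def by blast
  show ?thesis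
    apply (intro conjI allI impI ballI)
      apply (rule part1[OF assms(1,2) Bc Lc _ assms(5)], assumption+)
     apply (rule part2[OF assms(1,2) Bc Lc _ assms(5), THEN conjunct1], assumption+)
    apply (rule part2[OF assms(1,2) Bc Lc _ assms(5), THEN conjunct2], assumption+)
    done
qed

end
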